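(* Let $\mathcal H_S$, $\mathcal K$ be Hilbert spaces, $\mathcal B_S=\mathcal B(\mathcal H_S)$, $\mathcal F=\Gamma(L^2(\mathbb R,\mathcal K))$, let $\mathcal S_0\subseteq L^2(\mathbb R,\mathcal K)$ be a totalizing set, and let $r<s<t$. Let $(Q_{f,g})$ be a completely positive kernel on $\mathcal B_S$ based on $\chi_{[r,s]}\mathcal S_0$ and $(P_{f,g})$ a completely positive kernel on $\mathcal B_S$ based on $\chi_{[s,t]}\mathcal S_0$, and for $f,g\in\mathcal S_0$ put $Q_{f,g}:=Q_{\chi_{[r,s]}f,\chi_{[r,s]}g}$ and $P_{f,g}:=P_{\chi_{[s,t]}f,\chi_{[s,t]}g}$. Then the family $\{Q_{f,g}\circ P_{f,g}:f,g\in\mathcal S_0\}$ (composition of maps $\mathcal B_S\to\mathcal B_S$) is a completely positive kernel on $\mathcal B_S$.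
   Context: $\psi_f=\sum_{k\ge0}f^{\otimes k}/\sqrt{k!}$ is the exponential vector; $\mathcal S_0$ is totalizing if $\{\psi_f:f\in\mathcal S_0\}$ is total in $\mathcal F$; $\chi_I\mathcal S_0=\{\chi_If:f\in\mathcal S_0\}$. A completely positive kernel on a $C^*$-algebra $\mathcal B$ based on a set $\mathcal S$ is a family $\{P_{f,g}:f,g\in\mathcal S\}$ of linear maps $\mathcal B\to\mathcal B$ such that for every $n$, $f_1,\dots,f_n\in\mathcal S$, $b_1,\dots,b_n\in\mathcal B$, the map $x\mapsto\sum_{j,k}b_j^*P_{f_j,f_k}(x)b_k$ is completely positive. *)

theory Defs
  imports "HOL-Analysis.Analysis"
begin

class complex_inner = real_normed_vector +
  fixes scaleC :: "complex \<Rightarrow> 'a \<Rightarrow> 'a"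
    and cinner :: "'a \<Rightarrow> 'a \<Rightarrow> complex"
  assumes scaleC_add_right: "scaleC a (x + y) = scaleC a x + scaleC a y"
    and scaleC_add_left: "scaleC (a + b) x = scaleC a x + scaleC b x"
    and scaleC_scaleC: "scaleC a (scaleC b x) = scaleC (a * b) x"
    and scaleC_one: "scaleC 1 x = x"
    and scaleR_scaleC: "scaleR r x = scaleC (complex_of_real r) x"
    and cinner_conj: "cinner x y = cnj (cinner y x)"
    and cinner_add_right: "cinner x (y + z) = cinner x y + cinner x z"
    and cinner_scaleC_right: "cinner x (scaleC a y) = a * cinner x y"
    and cinner_self_norm: "cinner x x = complex_of_real ((norm x)\<^sup>2)"

class chilbert = complex_inner + complete_space

definition clin :: "('a::complex_inner \<Rightarrow> 'b::complex_inner) \<Rightarrow> bool" where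
  "clin A \<longleftrightarrow> (\<forall>x y. A (x + y) = A x + A y) \<and> (\<forall>c x. A (scaleC c x) = scaleC c (A x))"

definition bop :: "('a::chilbert \<Rightarrow> 'a) set" where
  "bop = {A. clin A \<and> (\<exists>K. \<forall>x. norm (A x) \<le> K * norm x)}"

text \<open>Hilbert space adjoint (exists uniquely for bounded operators).\<close>
definition cadj :: "('a::chilbert \<Rightarrow> 'a) \<Rightarrow> ('a \<Rightarrow> 'a)" where
  "cadj A = (THE B. \<forall>x y. cinner (A x) y = cinner x (B y))"

definition bop_linear :: "(('a::chilbert \<Rightarrow> 'a) \<Rightarrow> ('a \<Rightarrow> 'a)) \<Rightarrow> bool" where
  "bop_linear \<phi> \<longleftrightarrow> (\<forall>A\<in>bop. \<phi> A \<in> bop)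
     \<and> (\<forall>A\<in>bop. \<forall>B\<in>bop. \<phi> (\<lambda>v. A v + B v) = (\<lambda>v. \<phi> A v + \<phi> B v))
     \<and> (\<forall>A\<in>bop. \<forall>c. \<phi> (\<lambda>v. scaleC c (A v)) = (\<lambda>v. scaleC c (\<phi> A v)))"

text \<open>Positivity of an n\<times>n matrix [X i j] in M_n(B(H)) = B(H^n):
  the operator on H^n is positive, i.e. <xi, X xi> \<ge> 0 for all xi in H^n.\<close>
definition opmat_pos :: "nat \<Rightarrow> (nat \<Rightarrow> nat \<Rightarrow> ('a::chilbert \<Rightarrow> 'a)) \<Rightarrow> bool" where
  "opmat_pos n X \<longleftrightarrow> (\<forall>i<n. \<forall>j<n. X i j \<in> bop)
     \<and> (\<forall>\<xi> :: nat \<Rightarrow> 'a. \<exists>r\<ge>0.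
          (\<Sum>i<n. \<Sum>j<n. cinner (\<xi> i) (X i j (\<xi> j))) = complex_of_real r)"

definition cp_map :: "(('a::chilbert \<Rightarrow> 'a) \<Rightarrow> ('a \<Rightarrow> 'a)) \<Rightarrow> bool" where
  "cp_map \<phi> \<longleftrightarrow> bop_linear \<phi>
     \<and> (\<forall>n X. opmat_pos n X \<longrightarrow> opmat_pos n (\<lambda>i j. \<phi> (X i j)))"

definition cp_kernel :: "'s set \<Rightarrow> ('s \<Rightarrow> 's \<Rightarrow> ('a::chilbert \<Rightarrow> 'a) \<Rightarrow> ('a \<Rightarrow> 'a)) \<Rightarrow> bool" where
  "cp_kernel S P \<longleftrightarrow> (\<forall>f\<in>S. \<forall>g\<in>S. bop_linear (P f g))
     \<and> (\<forall>n (fs :: nat \<Rightarrow> 's) (bs :: nat \<Rightarrow> 'a \<Rightarrow> 'a).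
          (\<forall>j<n. fs j \<in> S \<and> bs j \<in> bop) \<longrightarrow>
          cp_map (\<lambda>x. (\<lambda>v. \<Sum>j<n. \<Sum>k<n. cadj (bs j) (P (fs j) (fs k) x (bs k v)))))"

definition L2 :: "(real \<Rightarrow> 'k::chilbert) set" where
  "L2 = {f. f \<in> borel_measurable lborel \<and> integrable lborel (\<lambda>t. (norm (f t))\<^sup>2)}"

definition L2_inner :: "(real \<Rightarrow> 'k::chilbert) \<Rightarrow> (real \<Rightarrow> 'k) \<Rightarrow> complex" where
  "L2_inner f g = (LINT t|lborel. cinner (f t) (g t))"

text \<open>Inner product of exponential vectors: <psi_f, psi_g> = exp <f,g>.\<close>
definition expvec_inner :: "(real \<Rightarrow> 'k::chilbert) \<Rightarrow> (real \<Rightarrow> 'k) \<Rightarrow> complex" where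
  "expvec_inner f g = exp (L2_inner f g)"

text \<open>S0 is totalizing: the closed span of {psi_f | f in S0} contains every exponential
  vector psi_g (g in L^2), hence (exponential vectors being total) equals the Fock space.
  The squared distance ||psi_g - sum c_f psi_f||^2 is written out via <psi_f,psi_g>.\<close>
definition totalizing :: "(real \<Rightarrow> 'k::chilbert) set \<Rightarrow> bool" where
  "totalizing S0 \<longleftrightarrow> S0 \<subseteq> L2 \<and>
     (\<forall>g\<in>L2. \<forall>\<epsilon>>0. \<exists>F c. finite F \<and> F \<subseteq> S0 \<and>
        Re (expvec_inner g g
            - (\<Sum>f\<in>F. c f * expvec_inner g f)
            - (\<Sum>f\<in>F. cnj (c f) * expvec_inner f g)
            + (\<Sum>f\<in>F. \<Sum>f'\<in>F. cnj (c f) * c f' * expvec_inner f f')) < \<epsilon>)"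

definition chi :: "real set \<Rightarrow> (real \<Rightarrow> 'k::real_vector) \<Rightarrow> (real \<Rightarrow> 'k)" where
  "chi I f = (\<lambda>x. indicator I x *\<^sub>R f x)"

end

theory Submission
  imports Defs
begin

lemma cinner_add_left: "cinner (x + y) z = cinner x z + cinner y (z::'a::complex_inner)"
proof -
  have "cinner (x + y) z = cnj (cinner z (x+y))" by (rule cinner_conj)
  also have "\<dots> = cnj (cinner z x) + cnj (cinner z y)" by (simp add: cinner_add_right)
  also have "\<dots> = cinner x z + cinner y z" by (simp add: cinner_conj[of x z] cinner_conj[of y z])
  finally show ?thesis .
qed
lemma cinner_scaleC_left: "cinner (scaleC a x) y = cnj a * cinner x (y::'a::complex_inner)"
proof -
  have "cinner (scaleC a x) y = cnj (cinner y (scaleC a x))" by (rule cinner_conj)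
  also have "\<dots> = cnj a * cnj (cinner y x)" by (simp add: cinner_scaleC_right)
  also have "\<dots> = cnj a * cinner x y" by (simp add: cinner_conj[of x y])
  finally show ?thesis .
qed
lemma cinner_zero_right[simp]: "cinner x (0::'a::complex_inner) = 0"
  using cinner_add_right[of x 0 0] by simp
lemma cinner_zero_left[simp]: "cinner (0::'a::complex_inner) x = 0"
  using cinner_add_left[of 0 0 x] by simp
lemma scaleC_zero_right[simp]: "scaleC a (0::'a::complex_inner) = 0"
  using scaleC_add_right[of a "0::'a" 0] by simp
lemma scaleC_zero_left[simp]: "scaleC 0 (x::'a::complex_inner) = 0"
  using scaleC_add_left[of 0 0 x] by simp
lemma scaleC_minus1: "scaleC (-1) (x::'a::complex_inner) = - x"
proof -
  have "scaleC (-1) x = scaleR (-1) x" by (simp add: scaleR_scaleC)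
  then show ?thesis by simp
qed
lemma scaleC_of_real: "scaleC (complex_of_real r) (x::'a::complex_inner) = scaleR r x"
  by (simp add: scaleR_scaleC)
lemma cinner_minus_right: "cinner x (- y) = - cinner x (y::'a::complex_inner)"
  using cinner_scaleC_right[of x "-1" y] by (simp add: scaleC_minus1)
lemma cinner_minus_left: "cinner (- x) y = - cinner x (y::'a::complex_inner)"
  using cinner_scaleC_left[of "-1" x y] by (simp add: scaleC_minus1)
lemma cinner_diff_right: "cinner x (y - z) = cinner x y - cinner x (z::'a::complex_inner)"
  using cinner_add_right[of x y "-z"] by (simp add: cinner_minus_right)
lemma cinner_diff_left: "cinner (x - y) z = cinner x z - cinner y (z::'a::complex_inner)"
  using cinner_add_left[of x "-y" z] by (simp add: cinner_minus_left)
lemma cinner_sum_right: "cinner (x::'a::complex_inner) (\<Sum>i\<in>A. f i) = (\<Sum>i\<in>A. cinner x (f i))"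
  by (induct A rule: infinite_finite_induct) (auto simp: cinner_add_right)
lemma cinner_sum_left: "cinner (\<Sum>i\<in>A. f i) (x::'a::complex_inner) = (\<Sum>i\<in>A. cinner (f i) x)"
  by (induct A rule: infinite_finite_induct) (auto simp: cinner_add_left)
lemma scaleC_sum_right: "scaleC a (\<Sum>i\<in>A. f i) = (\<Sum>i\<in>A. scaleC a (f i::'a::complex_inner))"
  by (induct A rule: infinite_finite_induct) (auto simp: scaleC_add_right)
lemma scaleC_sum_left: "scaleC (\<Sum>i\<in>A. f i) (x::'a::complex_inner) = (\<Sum>i\<in>A. scaleC (f i) x)"
  by (induct A rule: infinite_finite_induct) (auto simp: scaleC_add_left)
lemma cinner_self_eq_0[simp]: "cinner x x = 0 \<longleftrightarrow> (x::'a::complex_inner) = 0"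
  by (simp add: cinner_self_norm)
lemma cinner_self_real: "Re (cinner x x) = (norm (x::'a::complex_inner))\<^sup>2" "Im (cinner x x) = 0"
  by (simp_all add: cinner_self_norm)
lemma cinner_eq_zero_all: "(\<And>y. cinner y x = 0) \<Longrightarrow> (x::'a::complex_inner) = 0"
  using cinner_self_eq_0 by blast
lemma cinner_ext: "(\<And>y. cinner y x = cinner y z) \<Longrightarrow> x = (z::'a::complex_inner)"
  using cinner_eq_zero_all[of "x - z"] by (simp add: cinner_diff_right)
lemma scaleC_minus_left: "scaleC (- a) x = - scaleC a (x::'a::complex_inner)"
  by (metis scaleC_minus1 scaleC_scaleC mult_minus1)
lemma scaleC_minus_right: "scaleC a (- x) = - scaleC a (x::'a::complex_inner)"
  by (metis scaleC_minus1 scaleC_scaleC mult.commute)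
lemma scaleC_diff_right: "scaleC a (x - y) = scaleC a x - scaleC a (y::'a::complex_inner)"
  using scaleC_add_right[of a x "-y"] by (simp add: scaleC_minus_right)
lemma scaleC_diff_left: "scaleC (a - b) x = scaleC a x - scaleC b (x::'a::complex_inner)"
  using scaleC_add_left[of a "-b" x] by (simp add: scaleC_minus_left)
lemma norm_sq_cinner: "(norm x)\<^sup>2 = Re (cinner x (x::'a::complex_inner))"
  by (simp add: cinner_self_real)
lemma Re_of_real_mult: "Re (complex_of_real r * z) = r * Re z"
  by simp
lemma cnj_mult_self: "cnj a * a = complex_of_real ((cmod a)\<^sup>2)"
  by (subst complex_norm_square) (rule mult.commute)
lemma norm_scaleC: "norm (scaleC a x) = cmod a * norm (x::'a::complex_inner)"
proof -
  have "(norm (scaleC a x))\<^sup>2 = Re (cinner (scaleC a x) (scaleC a x))" by (rule norm_sq_cinner)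
  also have "cinner (scaleC a x) (scaleC a x) = (cnj a * a) * cinner x x"
    by (simp add: cinner_scaleC_left cinner_scaleC_right)
  also have "cnj a * a = complex_of_real ((cmod a)\<^sup>2)" by (rule cnj_mult_self)
  also have "Re (complex_of_real ((cmod a)\<^sup>2) * cinner x x) = (cmod a)\<^sup>2 * (norm x)\<^sup>2"
    by (simp only: Re_of_real_mult norm_sq_cinner)
  finally have "(norm (scaleC a x))\<^sup>2 = (cmod a * norm x)\<^sup>2" by (simp add: power_mult_distrib)
  then show ?thesis by (simp add: power2_eq_iff_nonneg)
qed
lemma Re_cinner_sym: "Re (cinner y x) = Re (cinner x (y::'a::complex_inner))"
  by (subst cinner_conj) simp
lemma norm_sq_add: "(norm (x + y))\<^sup>2 = (norm x)\<^sup>2 + (norm y)\<^sup>2 + 2 * Re (cinner x (y::'a::complex_inner))"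
proof -
  have "(norm (x+y))\<^sup>2 = Re (cinner x x + cinner y y + (cinner x y + cinner y x))"
    by (simp add: norm_sq_cinner cinner_add_left cinner_add_right algebra_simps)
  then show ?thesis by (simp add: norm_sq_cinner Re_cinner_sym[of y x])
qed
lemma norm_sq_diff: "(norm (x - y))\<^sup>2 = (norm x)\<^sup>2 + (norm y)\<^sup>2 - 2 * Re (cinner x (y::'a::complex_inner))"
  using norm_sq_add[of x "-y"] by (simp add: cinner_minus_right)
lemma cauchy_schwarz: "cmod (cinner x y) \<le> norm x * norm (y::'a::complex_inner)"
proof (cases "y = 0")
  case True then show ?thesis by simp
next
  case False
  define t where "t = cinner y x / complex_of_real ((norm y)\<^sup>2)"
  have ny: "norm y > 0" using False by simp
  have "0 \<le> (norm (x - scaleC t y))\<^sup>2" by simp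
  also have "\<dots> = (norm x)\<^sup>2 + (cmod t * norm y)\<^sup>2 - 2 * Re (cinner x (scaleC t y))"
    by (simp add: norm_sq_diff norm_scaleC)
  also have "cinner x (scaleC t y) = t * cinner x y" by (simp add: cinner_scaleC_right)
  also have "t * cinner x y = complex_of_real ((cmod (cinner x y))\<^sup>2 / (norm y)\<^sup>2)"
  proof -
    have "t * cinner x y = (cnj (cinner x y) * cinner x y) / complex_of_real ((norm y)\<^sup>2)"
      unfolding t_def by (subst cinner_conj[of y x]) simp
    also have "cnj (cinner x y) * cinner x y = complex_of_real ((cmod (cinner x y))\<^sup>2)"
      by (rule cnj_mult_self)
    finally show ?thesis by simp
  qed
  also have "cmod t = cmod (cinner x y) / (norm y)\<^sup>2"
  proof -
    have "cmod (complex_of_real ((norm y)\<^sup>2)) = (norm y)\<^sup>2" by (simp only: norm_of_real) simp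
    then show ?thesis unfolding t_def by (subst cinner_conj[of y x]) (simp only: norm_divide complex_mod_cnj)
  qed
  finally have "0 \<le> (norm x)\<^sup>2 - (cmod (cinner x y))\<^sup>2 / (norm y)\<^sup>2"
    using ny by (simp add: power_divide field_simps power2_eq_square)
  then have "(cmod (cinner x y))\<^sup>2 \<le> (norm x * norm y)\<^sup>2"
    using ny by (simp add: field_simps power_mult_distrib)
  then show ?thesis by (simp add: power2_le_iff_abs_le)
qed

lemma riesz:
  fixes l :: "'a::chilbert \<Rightarrow> complex"
  assumes ladd: "\<And>x y. l (x + y) = l x + l y"
    and lsc: "\<And>c x. l (scaleC c x) = c * l x"
    and lbd: "\<And>x. cmod (l x) \<le> C * norm x"
  shows "\<exists>w. \<forall>x. l x = cinner w x"
proof (cases "\<forall>x. l x = 0")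
  case True then show ?thesis by (intro exI[of _ 0]) simp
next
  case False
  then obtain x0 where lx0: "l x0 \<noteq> 0" by blast
  have l0: "l 0 = 0" using lsc[of 0 0] by simp
  have lminus: "l (x - y) = l x - l y" for x y
    using ladd[of "x - y" y] by simp
  have lR: "l (scaleR r x) = complex_of_real r * l x" for r x
    by (simp add: scaleR_scaleC lsc)
  have "0 < C * norm x0" using lbd[of x0] lx0 by (meson less_le_trans zero_less_norm_iff)
  then have C0: "C \<ge> 0" by (auto simp: zero_less_mult_iff)
  define Kr where "Kr = {m. l m = 0}"
  define D where "D = (\<lambda>m. norm (x0 - m)) ` Kr"
  define \<delta> where "\<delta> = Inf D"
  have D_ne: "D \<noteq> {}" unfolding D_def Kr_def using l0 by blast
  have D_bdd: "bdd_below D" unfolding D_def by (intro bdd_belowI[of _ 0]) auto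
  have \<delta>_le: "\<delta> \<le> norm (x0 - m)" if "l m = 0" for m
    unfolding \<delta>_def D_def using D_bdd that Kr_def D_def by (intro cInf_lower) auto
  have \<delta>0: "\<delta> \<ge> 0" using \<delta>_le[of 0] l0 unfolding \<delta>_def
    using D_ne D_bdd by (intro cInf_greatest) (auto simp: D_def)
  have "\<exists>m. l m = 0 \<and> norm (x0 - m) < \<delta> + 1 / real (Suc n)" for n
  proof -
    have "Inf D < \<delta> + 1 / real (Suc n)" unfolding \<delta>_def by simp
    then obtain d where "d \<in> D" "d < \<delta> + 1 / real (Suc n)"
      using cInf_lessD[OF D_ne] by blast
    then show ?thesis unfolding D_def Kr_def by auto
  qed
  then obtain ms where ms0: "\<And>n. l (ms n) = 0"
    and msd: "\<And>n. norm (x0 - ms n) < \<delta> + 1 / real (Suc n)" by metis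
  have par: "(norm (ms i - ms j))\<^sup>2 \<le> 2 * (norm (x0 - ms i))\<^sup>2 + 2 * (norm (x0 - ms j))\<^sup>2 - 4 * \<delta>\<^sup>2" for i j
  proof -
    define u where "u = x0 - ms i"
    define v where "v = x0 - ms j"
    have pl: "(norm (u + v))\<^sup>2 + (norm (u - v))\<^sup>2 = 2 * (norm u)\<^sup>2 + 2 * (norm v)\<^sup>2"
      by (simp add: norm_sq_add norm_sq_diff)
    have "u + v = scaleR 2 (x0 - scaleR (1/2) (ms i + ms j))"
      unfolding u_def v_def by (simp add: algebra_simps scaleR_2)
    then have "norm (u + v) = 2 * norm (x0 - scaleR (1/2) (ms i + ms j))" by simp
    moreover have "\<delta> \<le> norm (x0 - scaleR (1/2) (ms i + ms j))"
      by (rule \<delta>_le) (simp add: lR ladd ms0)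
    ultimately have "2 * \<delta> \<le> norm (u + v)" by simp
    then have "(2 * \<delta>)\<^sup>2 \<le> (norm (u + v))\<^sup>2" using \<delta>0 by (intro power_mono) auto
    moreover have "u - v = ms j - ms i" unfolding u_def v_def by simp
    moreover have "norm (ms j - ms i) = norm (ms i - ms j)" by (rule norm_minus_commute)
    ultimately show ?thesis using pl unfolding u_def v_def by (simp add: power_mult_distrib)
  qed
  have asq: "(norm (x0 - ms i))\<^sup>2 \<le> \<delta>\<^sup>2 + (2 * \<delta> + 1) / real (Suc i)" for i
  proof -
    have a0: "0 \<le> norm (x0 - ms i)" by simp
    have "(norm (x0 - ms i))\<^sup>2 \<le> (\<delta> + 1 / real (Suc i))\<^sup>2"
      using msd[of i] a0 by (intro power_mono) auto
    also have "\<dots> = \<delta>\<^sup>2 + (2 * \<delta> + 1 / real (Suc i)) / real (Suc i)"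
    proof -
      have "\<And>s::real. s > 0 \<Longrightarrow> (\<delta> + 1 / s)\<^sup>2 = \<delta>\<^sup>2 + (2 * \<delta> + 1 / s) / s"
        by (simp add: power2_eq_square field_simps)
      then show ?thesis by simp
    qed
    also have "\<dots> \<le> \<delta>\<^sup>2 + (2 * \<delta> + 1) / real (Suc i)"
      by (intro add_left_mono divide_right_mono) auto
    finally show ?thesis .
  qed
  have cau: "Cauchy ms"
  proof (rule metric_CauchyI)
    fix e :: real assume e: "e > 0"
    define B where "B = 4 * (2 * \<delta> + 1)"
    have B0: "B > 0" unfolding B_def using \<delta>0 by simp
    obtain N where N: "B / e\<^sup>2 < real N" using reals_Archimedean2 by blast
    have "\<forall>i\<ge>N. \<forall>j\<ge>N. dist (ms i) (ms j) < e"
    proof (intro allI impI)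
      fix i j assume ij: "N \<le> i" "N \<le> j"
      have Ni: "(2 * \<delta> + 1) / real (Suc i) \<le> (2 * \<delta> + 1) / real (Suc N)"
        using ij \<delta>0 by (intro divide_left_mono) auto
      have Nj: "(2 * \<delta> + 1) / real (Suc j) \<le> (2 * \<delta> + 1) / real (Suc N)"
        using ij \<delta>0 by (intro divide_left_mono) auto
      have "(norm (ms i - ms j))\<^sup>2 \<le> B / real (Suc N)"
      proof -
        have "B / real (Suc N) = 4 * ((2 * \<delta> + 1) / real (Suc N))" by (simp add: B_def)
        then show ?thesis using par[of i j] asq[of i] asq[of j] Ni Nj by linarith
      qed
      also have "\<dots> < e\<^sup>2"
      proof -
        have "B < e\<^sup>2 * real N" using N e by (simp add: field_simps)
        also have "\<dots> \<le> e\<^sup>2 * real (Suc N)" using e by simp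
        finally show ?thesis by (simp add: field_simps)
      qed
      finally have "(norm (ms i - ms j))\<^sup>2 < e\<^sup>2" .
      then have "norm (ms i - ms j) < e" using e by (simp add: power_less_imp_less_base)
      then show "dist (ms i) (ms j) < e" by (simp add: dist_norm)
    qed
    then show "\<exists>N. \<forall>m\<ge>N. \<forall>n\<ge>N. dist (ms m) (ms n) < e" by blast
  qed
  then obtain m where lim: "ms \<longlonglongrightarrow> m" using convergent_eq_Cauchy by blast
  have lm: "l m = 0"
  proof -
    have "cmod (l m) < e" if e: "e > 0" for e
    proof -
      have "\<forall>\<^sub>F n in sequentially. dist (ms n) m < e / (C + 1)"
        using lim e C0 by (simp add: tendsto_iff)
      then obtain n where n: "dist (ms n) m < e / (C + 1)" using eventually_sequentially by auto
      have "cmod (l m) = cmod (l (m - ms n))" by (simp add: lminus ms0)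
      also have "\<dots> \<le> C * norm (m - ms n)" by (rule lbd)
      also have "\<dots> \<le> C * (e / (C + 1))" using n C0
        by (intro mult_left_mono) (auto simp: dist_norm norm_minus_commute)
      also have "\<dots> < e" using C0 e by (simp add: field_simps)
      finally show ?thesis .
    qed
    then have "\<And>e. 0 < e \<Longrightarrow> cmod (l m) \<le> 0 + e" by (simp add: less_imp_le)
    then have "cmod (l m) \<le> 0" by (rule field_le_epsilon)
    then have "cmod (l m) = 0" by simp
    then show ?thesis by simp
  qed
  define z where "z = x0 - m"
  have zmin: "norm z \<le> norm (z - y)" if "l y = 0" for y
  proof -
    have "norm z \<le> \<delta> + e" if e: "e > 0" for e
    proof -
      obtain N1 where "inverse (real (Suc N1)) < e / 2" using reals_Archimedean[of "e/2"] e by auto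
      then have N1: "1 / real (Suc N1) < e / 2" by (simp add: inverse_eq_divide)
      have "\<forall>\<^sub>F n in sequentially. dist (ms n) m < e / 2"
        using lim e unfolding tendsto_iff by (metis half_gt_zero)
      then obtain N2 where N2: "\<And>n. n \<ge> N2 \<Longrightarrow> dist (ms n) m < e / 2"
        using eventually_sequentially by auto
      define n where "n = max N1 N2"
      have "1 / real (Suc n) \<le> 1 / real (Suc N1)" unfolding n_def
        by (intro divide_left_mono) auto
      have "norm z \<le> norm (x0 - ms n) + norm (ms n - m)" unfolding z_def
        using norm_triangle_ineq[of "x0 - ms n" "ms n - m"] by simp
      also have "\<dots> < (\<delta> + 1 / real (Suc n)) + e / 2"
        using msd[of n] N2[of n] by (intro add_strict_mono) (auto simp: n_def dist_norm)
      also have "\<dots> \<le> \<delta> + e" using N1 \<open>1 / real (Suc n) \<le> 1 / real (Suc N1)\<close> by simp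
      finally show ?thesis by simp
    qed
    then have "norm z \<le> \<delta>" by (rule field_le_epsilon)
    also have "\<delta> \<le> norm (x0 - (m + y))" by (rule \<delta>_le) (simp add: ladd lm that)
    also have "x0 - (m + y) = z - y" unfolding z_def by simp
    finally show ?thesis .
  qed
  have orth: "cinner y z = 0" if ly: "l y = 0" for y
  proof (cases "y = 0")
    case True then show ?thesis by simp
  next
    case False
    define c where "c = cinner y z"
    define t where "t = c / complex_of_real ((norm y)\<^sup>2)"
    have ny: "norm y > 0" using False by simp
    have "l (scaleC t y) = 0" by (simp add: lsc ly)
    then have "norm z \<le> norm (z - scaleC t y)" by (rule zmin)
    then have "(norm z)\<^sup>2 \<le> (norm (z - scaleC t y))\<^sup>2" by (simp add: power_mono)
    also have "\<dots> = (norm z)\<^sup>2 + (cmod t * norm y)\<^sup>2 - 2 * Re (cinner z (scaleC t y))"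
      by (simp add: norm_sq_diff norm_scaleC)
    also have "cinner z (scaleC t y) = t * cnj c"
      by (simp add: cinner_scaleC_right c_def cinner_conj[of z y])
    also have "t * cnj c = complex_of_real ((cmod c)\<^sup>2 / (norm y)\<^sup>2)"
    proof -
      have "t * cnj c = (cnj c * c) / complex_of_real ((norm y)\<^sup>2)"
        unfolding t_def by (simp add: mult.commute)
      also have "cnj c * c = complex_of_real ((cmod c)\<^sup>2)" by (rule cnj_mult_self)
      finally show ?thesis by simp
    qed
    also have "cmod t = cmod c / (norm y)\<^sup>2"
    proof -
      have "cmod (complex_of_real ((norm y)\<^sup>2)) = (norm y)\<^sup>2" by (simp only: norm_of_real) simp
      then show ?thesis unfolding t_def by (simp only: norm_divide)
    qed
    finally have "0 \<le> - (cmod c)\<^sup>2 / (norm y)\<^sup>2"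
      using ny by (simp add: power_divide field_simps power2_eq_square)
    then have "(cmod c)\<^sup>2 \<le> 0" using ny by (simp add: divide_nonneg_pos field_simps)
    then have "cmod c = 0" by (metis norm_ge_zero power2_less_eq_zero_iff)
    then show ?thesis unfolding c_def by simp
  qed
  have lz: "l z = l x0" unfolding z_def by (simp add: lminus lm)
  have z0: "z \<noteq> 0" using lz lx0 l0 by auto
  define N where "N = cinner z z"
  have N0: "N \<noteq> 0" unfolding N_def using z0 by simp
  define w where "w = scaleC (cnj (l z / N)) z"
  have "l x = cinner w x" for x
  proof -
    define x' where "x' = x - scaleC (l x / l z) z"
    have lzn: "l z \<noteq> 0" using lz lx0 by simp
    have "l x' = 0" unfolding x'_def using lzn by (simp add: lminus lsc)
    then have "cinner x' z = 0" by (rule orth)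
    then have "cinner z x' = 0" by (subst cinner_conj) simp
    then have czx: "cinner z x = (l x / l z) * N"
      unfolding x'_def N_def by (simp add: cinner_diff_right cinner_scaleC_right)
    have "cinner w x = (l z / N) * cinner z x" unfolding w_def by (simp add: cinner_scaleC_left)
    also have "\<dots> = l x" using czx N0 lzn by simp
    finally show ?thesis by simp
  qed
  then show ?thesis by blast
qed

lemma clinD: assumes "clin A"
  shows "A (x + y) = A x + A y" "A (scaleC c x) = scaleC c (A x)"
  using assms unfolding clin_def by auto

lemma clin_zero: "clin A \<Longrightarrow> A 0 = (0::'b::complex_inner)"
  using clinD(2)[of A 0 "0::'a::complex_inner"] by simp

lemma clin_minus: "clin A \<Longrightarrow> A (- x) = - (A (x::'a::complex_inner)::'b::complex_inner)"
  using clinD(2)[of A "-1" x] by (simp add: scaleC_minus1)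

lemma clin_diff: "clin A \<Longrightarrow> A (x - y) = A x - (A (y::'a::complex_inner)::'b::complex_inner)"
  using clinD(1)[of A x "-y"] clin_minus[of A y] by simp

lemma clin_sum: "clin A \<Longrightarrow> A (\<Sum>i\<in>I. f i) = (\<Sum>i\<in>I. A (f i::'a::complex_inner)::'b::complex_inner)"
  by (induct I rule: infinite_finite_induct) (auto simp: clin_zero clinD)

lemma bop_clin: "A \<in> bop \<Longrightarrow> clin A"
  unfolding bop_def by simp

lemma bop_bound: assumes "A \<in> bop" obtains K where "K \<ge> 0" "\<And>x. norm (A x) \<le> K * norm x"
proof -
  from assms obtain K where K: "\<And>x. norm (A x) \<le> K * norm x" unfolding bop_def by auto
  have "norm (A x) \<le> max K 0 * norm x" for x
    using K[of x] by (smt (verit) max.cobounded1 mult_right_mono norm_ge_zero)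
  then show ?thesis using that[of "max K 0"] by simp
qed

lemma bopI: "clin A \<Longrightarrow> (\<And>x. norm (A x) \<le> K * norm x) \<Longrightarrow> A \<in> bop"
  unfolding bop_def by auto

lemma clin_add_fun: "clin A \<Longrightarrow> clin B \<Longrightarrow> clin (\<lambda>v. A v + B v)"
  unfolding clin_def by (simp add: scaleC_add_right algebra_simps)

lemma bop_add: assumes "A \<in> bop" "B \<in> bop" shows "(\<lambda>v. A v + B v) \<in> bop"
proof -
  obtain K1 where K1: "\<And>x. norm (A x) \<le> K1 * norm x" using bop_bound[OF assms(1)] by blast
  obtain K2 where K2: "\<And>x. norm (B x) \<le> K2 * norm x" using bop_bound[OF assms(2)] by blast
  show ?thesis
  proof (rule bopI[where K="K1 + K2"])
    show "clin (\<lambda>v. A v + B v)" using assms by (simp add: bop_clin clin_add_fun)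
    fix x show "norm (A x + B x) \<le> (K1 + K2) * norm x"
      using norm_triangle_ineq[of "A x" "B x"] K1[of x] K2[of x] by (simp add: algebra_simps)
  qed
qed

lemma bop_zero: "(\<lambda>v. 0) \<in> bop"
  by (rule bopI[where K=0]) (auto simp: clin_def)

lemma bop_sum: "finite I \<Longrightarrow> (\<And>i. i \<in> I \<Longrightarrow> A i \<in> bop) \<Longrightarrow> (\<lambda>v. \<Sum>i\<in>I. A i v) \<in> bop"
proof (induct I rule: finite_induct)
  case empty then show ?case using bop_zero by simp
next
  case (insert x F)
  then have "(\<lambda>v. A x v + (\<Sum>i\<in>F. A i v)) \<in> bop" by (intro bop_add) auto
  then show ?case using insert by simp
qed

lemma bop_scaleC: assumes "A \<in> bop" shows "(\<lambda>v. scaleC c (A v)) \<in> bop"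
proof -
  obtain K where K: "\<And>x. norm (A x) \<le> K * norm x" using bop_bound[OF assms] by blast
  show ?thesis
  proof (rule bopI[where K="cmod c * K"])
    show "clin (\<lambda>v. scaleC c (A v))" using bop_clin[OF assms]
      unfolding clin_def by (simp add: scaleC_add_right scaleC_scaleC mult.commute)
    fix x show "norm (scaleC c (A x)) \<le> cmod c * K * norm x"
      using K[of x] by (simp add: norm_scaleC mult.assoc mult_left_mono)
  qed
qed

lemma bop_comp: assumes "A \<in> bop" "B \<in> bop" shows "(\<lambda>v. A (B v)) \<in> bop"
proof -
  obtain K1 where K1: "K1 \<ge> 0" "\<And>x. norm (A x) \<le> K1 * norm x" using bop_bound[OF assms(1)] by blast
  obtain K2 where K2: "\<And>x. norm (B x) \<le> K2 * norm x" using bop_bound[OF assms(2)] by blast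
  show ?thesis
  proof (rule bopI[where K="K1 * K2"])
    show "clin (\<lambda>v. A (B v))" using bop_clin[OF assms(1)] bop_clin[OF assms(2)]
      unfolding clin_def by simp
    fix x have "norm (A (B x)) \<le> K1 * norm (B x)" by (rule K1(2))
    also have "\<dots> \<le> K1 * (K2 * norm x)" using K1(1) K2[of x] by (rule mult_left_mono[rotated])
    finally show "norm (A (B x)) \<le> K1 * K2 * norm x" by (simp add: mult.assoc)
  qed
qed

lemma bop_comp': "A \<in> bop \<Longrightarrow> B \<in> bop \<Longrightarrow> A \<circ> B \<in> bop"
  using bop_comp[of A B] by (simp add: comp_def)

definition rk :: "'a::complex_inner \<Rightarrow> 'a \<Rightarrow> 'a \<Rightarrow> 'a" where
  "rk u w = (\<lambda>v. scaleC (cinner w v) u)"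

lemma bop_rk: "rk u w \<in> (bop :: ('a::chilbert \<Rightarrow> 'a) set)"
proof (rule bopI[where K="norm w * norm u"])
  show "clin (rk u w)" unfolding clin_def rk_def
    by (simp add: cinner_add_right cinner_scaleC_right scaleC_add_left scaleC_scaleC)
  fix x show "norm (rk u w x) \<le> norm w * norm u * norm x"
    unfolding rk_def using mult_left_mono[OF cauchy_schwarz[of w x] norm_ge_zero[of u]]
    by (simp add: norm_scaleC mult.commute mult.left_commute)
qed

lemma adjoint_exists:
  fixes A :: "'a::chilbert \<Rightarrow> 'a"
  assumes "A \<in> bop"
  shows "\<exists>B. \<forall>x y. cinner (A x) y = cinner x (B y)"
proof -
  obtain K where K: "K \<ge> 0" "\<And>x. norm (A x) \<le> K * norm x" using bop_bound[OF assms] by blast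
  have cl: "clin A" using assms by (rule bop_clin)
  have "\<exists>w. \<forall>x. cinner y (A x) = cinner w x" for y
  proof (rule riesz[where C="norm y * K"])
    show "cinner y (A (x + z)) = cinner y (A x) + cinner y (A z)" for x z
      by (simp add: clinD[OF cl] cinner_add_right)
    show "cinner y (A (scaleC c x)) = c * cinner y (A x)" for c x
      by (simp add: clinD[OF cl] cinner_scaleC_right)
    show "cmod (cinner y (A x)) \<le> norm y * K * norm x" for x
    proof -
      have "cmod (cinner y (A x)) \<le> norm y * norm (A x)" by (rule cauchy_schwarz)
      also have "\<dots> \<le> norm y * (K * norm x)" using K(2)[of x] by (simp add: mult_left_mono)
      finally show ?thesis by (simp add: mult.assoc)
    qed
  qed
  then obtain B where B: "\<And>y x. cinner y (A x) = cinner (B y) x" by metis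
  have "cinner (A x) y = cinner x (B y)" for x y
    using B[of y x] by (metis cinner_conj)
  then show ?thesis by blast
qed

lemma cadj_prop:
  fixes A :: "'a::chilbert \<Rightarrow> 'a"
  assumes "A \<in> bop"
  shows "cinner (A x) y = cinner x (cadj A y)"
proof -
  obtain B where B: "\<forall>x y. cinner (A x) y = cinner x (B y)" using adjoint_exists[OF assms] by blast
  have "cadj A = B" unfolding cadj_def
  proof (rule the_equality)
    show "\<forall>x y. cinner (A x) y = cinner x (B y)" by (rule B)
    fix B' assume B': "\<forall>x y. cinner (A x) y = cinner x (B' y)"
    show "B' = B"
    proof
      fix y show "B' y = B y" using B B' by (intro cinner_ext) metis
    qed
  qed
  then show ?thesis using B by simp
qed

lemma cadj_bop:
  fixes A :: "'a::chilbert \<Rightarrow> 'a"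
  assumes "A \<in> bop"
  shows "cadj A \<in> bop"
proof -
  obtain K where K: "K \<ge> 0" "\<And>x. norm (A x) \<le> K * norm x" using bop_bound[OF assms] by blast
  have cl: "clin (cadj A)" unfolding clin_def
  proof (intro conjI allI)
    fix x y show "cadj A (x + y) = cadj A x + cadj A y"
      by (rule cinner_ext) (simp add: cadj_prop[OF assms, symmetric] cinner_add_right)
  next
    fix c x show "cadj A (scaleC c x) = scaleC c (cadj A x)"
      by (rule cinner_ext) (simp add: cadj_prop[OF assms, symmetric] cinner_scaleC_right)
  qed
  show ?thesis
  proof (rule bopI[OF cl, where K=K])
    fix y
    have "(norm (cadj A y))\<^sup>2 = Re (cinner (cadj A y) (cadj A y))" by (rule norm_sq_cinner)
    also have "cinner (cadj A y) (cadj A y) = cinner (A (cadj A y)) y"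
      by (simp add: cadj_prop[OF assms])
    also have "Re \<dots> \<le> cmod (cinner (A (cadj A y)) y)" by (rule complex_Re_le_cmod)
    also have "\<dots> \<le> norm (A (cadj A y)) * norm y" by (rule cauchy_schwarz)
    also have "\<dots> \<le> K * norm (cadj A y) * norm y" using K(2) by (simp add: mult_right_mono)
    finally have "norm (cadj A y) * norm (cadj A y) \<le> (K * norm y) * norm (cadj A y)"
      by (simp add: power2_eq_square mult_ac)
    then show "norm (cadj A y) \<le> K * norm y"
      by (cases "norm (cadj A y) = 0") (use K(1) in auto)
  qed
qed

definition nonneg :: "complex \<Rightarrow> bool" where
  "nonneg z \<longleftrightarrow> (\<exists>r\<ge>0. z = complex_of_real r)"

lemma nonneg_iff: "nonneg z \<longleftrightarrow> Im z = 0 \<and> Re z \<ge> 0"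
proof
  assume "nonneg z" then show "Im z = 0 \<and> Re z \<ge> 0" unfolding nonneg_def by auto
next
  assume h: "Im z = 0 \<and> Re z \<ge> 0"
  then have "z = complex_of_real (Re z)" by (simp add: complex_eq_iff)
  then show "nonneg z" unfolding nonneg_def using h by blast
qed

lemma nonneg_add: "nonneg a \<Longrightarrow> nonneg b \<Longrightarrow> nonneg (a + b)"
  by (simp add: nonneg_iff)

lemma nonneg_0[simp]: "nonneg 0" by (simp add: nonneg_iff)

lemma nonneg_sum: "(\<And>i. i \<in> I \<Longrightarrow> nonneg (f i)) \<Longrightarrow> nonneg (\<Sum>i\<in>I. f i)"
  by (induct I rule: infinite_finite_induct) (auto simp: nonneg_add)

lemma nonneg_cnj_mult: "nonneg (cnj a * a)"
  unfolding cnj_mult_self nonneg_def by (intro exI[of _ "(cmod a)\<^sup>2"]) simp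

lemma opmat_pos_iff: "opmat_pos n X \<longleftrightarrow> (\<forall>i<n. \<forall>j<n. X i j \<in> bop) \<and>
   (\<forall>\<xi>. nonneg (\<Sum>i<n. \<Sum>j<n. cinner (\<xi> i) (X i j (\<xi> j))))"
  unfolding opmat_pos_def nonneg_def by simp

definition form :: "nat \<Rightarrow> (nat \<Rightarrow> nat \<Rightarrow> complex) \<Rightarrow> (nat \<Rightarrow> complex) \<Rightarrow> complex" where
  "form K M c = (\<Sum>i<K. \<Sum>j<K. cnj (c i) * M i j * c j)"

definition psd :: "nat \<Rightarrow> (nat \<Rightarrow> nat \<Rightarrow> complex) \<Rightarrow> bool" where
  "psd K M \<longleftrightarrow> (\<forall>c. nonneg (form K M c))"

lemma form_Suc: "form (Suc K) M c = form K M c + (\<Sum>i<K. cnj (c i) * M i K) * c K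
   + cnj (c K) * (\<Sum>j<K. M K j * c j) + cnj (c K) * M K K * c K"
proof -
  have "form (Suc K) M c = (\<Sum>i<K. (\<Sum>j<K. cnj (c i) * M i j * c j) + cnj (c i) * M i K * c K)
     + ((\<Sum>j<K. cnj (c K) * M K j * c j) + cnj (c K) * M K K * c K)"
    unfolding form_def by (simp only: sum.lessThan_Suc)
  also have "\<dots> = form K M c + (\<Sum>i<K. cnj (c i) * M i K * c K)
     + (\<Sum>j<K. cnj (c K) * M K j * c j) + cnj (c K) * M K K * c K"
    unfolding form_def by (simp only: sum.distrib add.assoc)
  also have "(\<Sum>i<K. cnj (c i) * M i K * c K) = (\<Sum>i<K. cnj (c i) * M i K) * c K"
    by (simp only: sum_distrib_right)
  also have "(\<Sum>j<K. cnj (c K) * M K j * c j) = cnj (c K) * (\<Sum>j<K. M K j * c j)"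
    by (simp only: sum_distrib_left mult.assoc)
  finally show ?thesis .
qed

lemma form_cong: "(\<And>i. i < K \<Longrightarrow> c i = c' i) \<Longrightarrow> form K M c = form K M c'"
  unfolding form_def by (intro sum.cong) auto

lemma form_cong_M: "(\<And>i j. i < K \<Longrightarrow> j < K \<Longrightarrow> M i j = M' i j) \<Longrightarrow> form K M c = form K M' c"
  unfolding form_def by (intro sum.cong) auto

lemma psd_Suc_restrict: assumes "psd (Suc K) M" shows "psd K M"
  unfolding psd_def
proof
  fix c
  have "form (Suc K) M (c(K := 0)) = form K M (c(K := 0))" by (simp add: form_Suc)
  also have "\<dots> = form K M c" by (rule form_cong) simp
  finally show "nonneg (form K M c)" using assms unfolding psd_def by metis
qed

lemma form_two:
  assumes "i < K" "j < K" "i \<noteq> j"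
  shows "form K M (\<lambda>x. if x = i then a else if x = j then b else 0)
     = cnj a * M i i * a + cnj a * M i j * b + cnj b * M j i * a + cnj b * M j j * b"
proof -
  let ?c = "\<lambda>x. if x = i then a else if x = j then b else 0"
  have inner: "(\<Sum>y<K. cnj (?c x) * M x y * ?c y) = cnj (?c x) * M x i * a + cnj (?c x) * M x j * b" for x
  proof -
    have "(\<Sum>y<K. cnj (?c x) * M x y * ?c y) = (\<Sum>y\<in>{i,j}. cnj (?c x) * M x y * ?c y)"
      by (rule sum.mono_neutral_right) (use assms in auto)
    then show ?thesis using assms by simp
  qed
  have "form K M ?c = (\<Sum>x<K. cnj (?c x) * M x i * a + cnj (?c x) * M x j * b)"
    unfolding form_def by (simp only: inner)
  also have "\<dots> = (\<Sum>x\<in>{i,j}. cnj (?c x) * M x i * a + cnj (?c x) * M x j * b)"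
    by (rule sum.mono_neutral_right) (use assms in auto)
  also have "\<dots> = cnj a * M i i * a + cnj a * M i j * b + cnj b * M j i * a + cnj b * M j j * b"
    using assms by (simp add: algebra_simps)
  finally show ?thesis .
qed

lemma form_one:
  assumes "i < K"
  shows "form K M (\<lambda>x. if x = i then a else 0) = cnj a * M i i * a"
proof -
  let ?c = "\<lambda>x. if x = i then a else 0"
  have inner: "(\<Sum>y<K. cnj (?c x) * M x y * ?c y) = cnj (?c x) * M x i * a" for x
  proof -
    have "(\<Sum>y<K. cnj (?c x) * M x y * ?c y) = (\<Sum>y\<in>{i}. cnj (?c x) * M x y * ?c y)"
      by (rule sum.mono_neutral_right) (use assms in auto)
    then show ?thesis by simp
  qed
  have "form K M ?c = (\<Sum>x<K. cnj (?c x) * M x i * a)"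
    unfolding form_def by (simp only: inner)
  also have "\<dots> = (\<Sum>x\<in>{i}. cnj (?c x) * M x i * a)"
    by (rule sum.mono_neutral_right) (use assms in auto)
  finally show ?thesis by simp
qed

lemma psd_diag: assumes "psd K M" "i < K" shows "nonneg (M i i)"
proof -
  have "nonneg (form K M (\<lambda>x. if x = i then 1 else 0))" using assms(1) unfolding psd_def by blast
  then show ?thesis using form_one[OF assms(2), of M 1] by simp
qed

lemma psd_herm: assumes "psd K M" "i < K" "j < K" shows "M j i = cnj (M i j)"
proof (cases "i = j")
  case True
  then show ?thesis using psd_diag[OF assms(1,2)] by (simp add: nonneg_iff complex_eq_iff)
next
  case False
  have d1: "Im (M i i) = 0" "Im (M j j) = 0" using psd_diag[OF assms(1,2)] psd_diag[OF assms(1,3)]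
    by (auto simp: nonneg_iff)
  have "nonneg (form K M (\<lambda>x. if x = i then 1 else if x = j then 1 else 0))"
    using assms unfolding psd_def by blast
  then have h1: "Im (M i j + M j i) = 0" using form_two[OF assms(2,3) False, of M 1 1] d1
    by (simp add: nonneg_iff)
  have "nonneg (form K M (\<lambda>x. if x = i then 1 else if x = j then \<i> else 0))"
    using assms unfolding psd_def by blast
  then have h2: "Re (M i j - M j i) = 0" using form_two[OF assms(2,3) False, of M 1 \<i>] d1
    by (simp add: nonneg_iff)
  show ?thesis using h1 h2 by (simp add: complex_eq_iff)
qed

lemma psd_zero_col: assumes "psd K M" "i < K" "j < K" "M j j = 0" shows "M i j = 0"
proof (rule ccontr)
  assume ne: "M i j \<noteq> 0"
  have ij: "i \<noteq> j" using ne assms(4) by auto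
  define z where "z = M i j"
  define s where "s = (Re (M i i) + 1) / (2 * (cmod z)\<^sup>2)"
  have zpos: "(cmod z)\<^sup>2 > 0" using ne unfolding z_def by simp
  define b where "b = - complex_of_real s * cnj z"
  have herm: "M j i = cnj z" unfolding z_def by (rule psd_herm[OF assms(1,2,3)])
  have "nonneg (form K M (\<lambda>x. if x = i then 1 else if x = j then b else 0))"
    using assms unfolding psd_def by blast
  then have "nonneg (M i i + z * b + cnj b * cnj z)"
    using form_two[OF assms(2,3) ij, of M 1 b] assms(4) herm unfolding z_def by simp
  moreover have "z * b = - complex_of_real (s * (cmod z)\<^sup>2)"
  proof -
    have "z * b = - complex_of_real s * (z * cnj z)" unfolding b_def by (simp add: algebra_simps)
    also have "z * cnj z = complex_of_real ((cmod z)\<^sup>2)" by (simp only: complex_norm_square)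
    finally show ?thesis by simp
  qed
  moreover have "cnj b * cnj z = - complex_of_real (s * (cmod z)\<^sup>2)"
  proof -
    have "cnj b * cnj z = - complex_of_real s * (z * cnj z)" unfolding b_def by (simp add: algebra_simps)
    also have "z * cnj z = complex_of_real ((cmod z)\<^sup>2)" by (simp only: complex_norm_square)
    finally show ?thesis by simp
  qed
  ultimately have "Re (M i i) - 2 * (s * (cmod z)\<^sup>2) \<ge> 0" by (simp add: nonneg_iff)
  moreover have "s * (cmod z)\<^sup>2 = (Re (M i i) + 1) / 2" unfolding s_def using zpos by simp
  ultimately show False by simp
qed

lemma chol: "psd K M \<Longrightarrow> \<exists>(L::nat) \<omega>. \<forall>i<K. \<forall>j<K. M i j = (\<Sum>l<L. \<omega> l i * cnj (\<omega> l j))"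
proof (induct K arbitrary: M)
  case 0 then show ?case by auto
next
  case (Suc K M)
  have psdK: "psd K M" using Suc.prems by (rule psd_Suc_restrict)
  have herm: "\<And>i j. i < Suc K \<Longrightarrow> j < Suc K \<Longrightarrow> M j i = cnj (M i j)"
    using Suc.prems by (rule psd_herm)
  have dK: "nonneg (M K K)" using Suc.prems by (rule psd_diag) simp
  show ?case
  proof (cases "M K K = 0")
    case True
    have z1: "M i K = 0" if "i < Suc K" for i using psd_zero_col[OF Suc.prems that _ True] by simp
    have z2: "M K i = 0" if "i < Suc K" for i using herm[OF that, of K] z1[OF that] by simp
    obtain L :: nat and \<omega> where \<omega>: "\<forall>i<K. \<forall>j<K. M i j = (\<Sum>l<L. \<omega> l i * cnj (\<omega> l j))"
      using Suc.hyps[OF psdK] by blast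
    define \<omega>' where "\<omega>' = (\<lambda>l i. if i < K then \<omega> l i else 0)"
    have "\<forall>i<Suc K. \<forall>j<Suc K. M i j = (\<Sum>l<L. \<omega>' l i * cnj (\<omega>' l j))"
    proof (intro allI impI)
      fix i j assume ij: "i < Suc K" "j < Suc K"
      show "M i j = (\<Sum>l<L. \<omega>' l i * cnj (\<omega>' l j))"
      proof (cases "i < K \<and> j < K")
        case True then show ?thesis using \<omega> unfolding \<omega>'_def by simp
      next
        case False
        then have "i = K \<or> j = K" using ij by auto
        then show ?thesis using z1[OF ij(1)] z2[OF ij(2)] unfolding \<omega>'_def by auto
      qed
    qed
    then show ?thesis by blast
  next
    case False
    define m where "m = M K K"
    have m0: "m \<noteq> 0" using False unfolding m_def by simp
    define \<mu> where "\<mu> = Re m"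
    have mreal: "m = complex_of_real \<mu>" using dK unfolding m_def \<mu>_def nonneg_iff
      by (simp add: complex_eq_iff)
    have "\<mu> \<noteq> 0" using m0 mreal by auto
    then have \<mu>pos: "\<mu> > 0" using dK unfolding m_def \<mu>_def nonneg_iff by auto
    have cm: "cnj m = m" using mreal by simp
    define sq where "sq = complex_of_real (sqrt \<mu>)"
    have sq0: "sq \<noteq> 0" using \<mu>pos unfolding sq_def by simp
    have sqsq: "sq * sq = m" using \<mu>pos mreal unfolding sq_def
      by (simp flip: of_real_mult)
    have csq: "cnj sq = sq" unfolding sq_def by simp
    define u where "u = (\<lambda>i. M i K / sq)"
    define M' where "M' = (\<lambda>i j. M i j - u i * cnj (u j))"
    have psd': "psd K M'" unfolding psd_def
    proof
      fix c
      define s where "s = (\<Sum>j<K. M K j * c j)"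
      define c' where "c' = c(K := - s / m)"
      have s1: "(\<Sum>i<K. cnj (c i) * M i K) = cnj s"
        unfolding s_def by (simp add: herm[of _ K] mult.commute)
      have s2: "(\<Sum>j<K. cnj (u j) * c j) = s / sq"
        unfolding s_def u_def by (simp add: herm[of _ K] csq sum_divide_distrib mult.commute)
      have s3: "(\<Sum>i<K. cnj (c i) * u i) = cnj s / sq"
        unfolding u_def s1[symmetric] by (simp add: sum_divide_distrib)
      have "form K M' c = form K M c - (\<Sum>i<K. \<Sum>j<K. cnj (c i) * (u i * cnj (u j)) * c j)"
        unfolding form_def M'_def by (simp add: algebra_simps sum_subtractf)
      also have "(\<Sum>i<K. \<Sum>j<K. cnj (c i) * (u i * cnj (u j)) * c j)
          = (\<Sum>i<K. cnj (c i) * u i) * (\<Sum>j<K. cnj (u j) * c j)"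
        unfolding sum_product by (intro sum.cong refl) (simp add: mult_ac)
      also have "\<dots> = cnj s * s / m" using s2 s3 sqsq by simp
      finally have f1: "form K M' c = form K M c - cnj s * s / m" .
      have "form (Suc K) M c' = form K M c' + (\<Sum>i<K. cnj (c' i) * M i K) * c' K
          + cnj (c' K) * (\<Sum>j<K. M K j * c' j) + cnj (c' K) * M K K * c' K"
        by (rule form_Suc)
      also have "form K M c' = form K M c" by (rule form_cong) (simp add: c'_def)
      also have "(\<Sum>i<K. cnj (c' i) * M i K) = cnj s" unfolding c'_def s1[symmetric] by simp
      also have "(\<Sum>j<K. M K j * c' j) = s" unfolding c'_def s_def by simp
      also have "c' K = - s / m" unfolding c'_def by simp
      finally have "form (Suc K) M c' = form K M c + cnj s * (- s / m) + cnj (- s / m) * s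
          + cnj (- s / m) * m * (- s / m)" unfolding m_def .
      also have "\<dots> = form K M c - cnj s * s / m" using m0 cm
        by (simp add: field_simps)
      finally have "form K M' c = form (Suc K) M c'" using f1 by simp
      then show "nonneg (form K M' c)" using Suc.prems unfolding psd_def by simp
    qed
    obtain L :: nat and \<omega> where \<omega>: "\<forall>i<K. \<forall>j<K. M' i j = (\<Sum>l<L. \<omega> l i * cnj (\<omega> l j))"
      using Suc.hyps[OF psd'] by blast
    define \<omega>' where "\<omega>' = (\<lambda>l i. if l < L then (if i < K then \<omega> l i else 0) else u i)"
    have "\<forall>i<Suc K. \<forall>j<Suc K. M i j = (\<Sum>l<Suc L. \<omega>' l i * cnj (\<omega>' l j))"
    proof (intro allI impI)
      fix i j assume ij: "i < Suc K" "j < Suc K"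
      have split: "(\<Sum>l<Suc L. \<omega>' l i * cnj (\<omega>' l j))
          = (\<Sum>l<L. \<omega>' l i * cnj (\<omega>' l j)) + u i * cnj (u j)"
        by (simp add: \<omega>'_def)
      show "M i j = (\<Sum>l<Suc L. \<omega>' l i * cnj (\<omega>' l j))"
      proof (cases "i < K \<and> j < K")
        case True
        then have "(\<Sum>l<L. \<omega>' l i * cnj (\<omega>' l j)) = M' i j" using \<omega> unfolding \<omega>'_def by simp
        then show ?thesis using split unfolding M'_def by simp
      next
        case False
        then have "(\<Sum>l<L. \<omega>' l i * cnj (\<omega>' l j)) = 0" unfolding \<omega>'_def by auto
        moreover have "u i * cnj (u j) = M i j"
        proof (cases "j = K")
          case True
          then show ?thesis unfolding u_def using sq0 sqsq csq m_def cm m0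
            by (simp add: field_simps)
        next
          case jK: False
          then have iK: "i = K" using False ij by auto
          have "M K j = cnj (M j K)" using herm[of j K] ij jK by simp
          then show ?thesis unfolding u_def iK using sq0 sqsq csq m_def cm m0
            by (simp add: field_simps)
        qed
        ultimately show ?thesis using split by simp
      qed
    qed
    then show ?thesis by blast
  qed
qed

definition orthon :: "nat \<Rightarrow> (nat \<Rightarrow> 'a::complex_inner) \<Rightarrow> bool" where
  "orthon N e \<longleftrightarrow> (\<forall>i<N. \<forall>j<N. cinner (e i) (e j) = (if i = j then 1 else 0))"

definition spans :: "nat \<Rightarrow> (nat \<Rightarrow> 'a::complex_inner) \<Rightarrow> bool" where
  "spans d e \<longleftrightarrow> (\<forall>v. v = (\<Sum>r<d. scaleC (cinner (e r) v) (e r)))"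

lemma sum_delta_ortho:
  assumes "orthon N e" "i < N"
  shows "(\<Sum>r<N. f r * cinner (e i) (e r)) = f i"
proof -
  have "(\<Sum>r<N. f r * cinner (e i) (e r)) = (\<Sum>r<N. if r = i then f r else 0)"
    using assms unfolding orthon_def by (intro sum.cong) auto
  also have "\<dots> = f i" using assms(2) by (simp add: sum.delta')
  finally show ?thesis .
qed

lemma dichot: "(\<exists>e::nat \<Rightarrow> 'a::complex_inner. orthon N e) \<or> (\<exists>d (e::nat \<Rightarrow> 'a). orthon d e \<and> spans d e)"
proof (induct N)
  case 0 then show ?case unfolding orthon_def by auto
next
  case (Suc N)
  show ?case
  proof (cases "\<exists>d (e::nat \<Rightarrow> 'a). orthon d e \<and> spans d e")
    case True then show ?thesis by blast
  next
    case False
    then obtain e :: "nat \<Rightarrow> 'a" where e: "orthon N e" using Suc by blast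
    have "\<not> spans N e" using False e by blast
    then obtain v where v: "v \<noteq> (\<Sum>r<N. scaleC (cinner (e r) v) (e r))" unfolding spans_def by blast
    define u where "u = v - (\<Sum>r<N. scaleC (cinner (e r) v) (e r))"
    have u0: "u \<noteq> 0" using v unfolding u_def by simp
    have uo: "cinner (e i) u = 0" if "i < N" for i
    proof -
      have "cinner (e i) u = cinner (e i) v - (\<Sum>r<N. cinner (e r) v * cinner (e i) (e r))"
        unfolding u_def by (simp add: cinner_diff_right cinner_sum_right cinner_scaleC_right)
      also have "(\<Sum>r<N. cinner (e r) v * cinner (e i) (e r)) = cinner (e i) v"
        by (rule sum_delta_ortho[OF e that])
      finally show ?thesis by simp
    qed
    define k where "k = complex_of_real (1 / norm u)"
    define e' where "e' = e(N := scaleC k u)"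
    have nu: "norm u > 0" using u0 by simp
    have "orthon (Suc N) e'" unfolding orthon_def
    proof (intro allI impI)
      fix i j assume ij: "i < Suc N" "j < Suc N"
      show "cinner (e' i) (e' j) = (if i = j then 1 else 0)"
      proof (cases "i < N")
        case iN: True
        show ?thesis
        proof (cases "j < N")
          case True then show ?thesis using e iN unfolding e'_def orthon_def by auto
        next
          case False then have "j = N" using ij by simp
          then show ?thesis using iN uo[OF iN] unfolding e'_def by (simp add: cinner_scaleC_right)
        qed
      next
        case False
        then have iN: "i = N" using ij by simp
        show ?thesis
        proof (cases "j < N")
          case True
          have "cinner u (e j) = 0" using uo[OF True] by (subst cinner_conj) simp
          then show ?thesis using True iN unfolding e'_def by (simp add: cinner_scaleC_left)
        next
          case False then have "j = N" using ij by simp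
          have "cinner (scaleC k u) (scaleC k u) = cnj k * k * cinner u u"
            by (simp add: cinner_scaleC_left cinner_scaleC_right)
          also have "cinner u u = complex_of_real ((norm u)\<^sup>2)" by (rule cinner_self_norm)
          also have "cnj k * k * complex_of_real ((norm u)\<^sup>2) = 1"
            unfolding k_def using nu by (simp flip: of_real_mult of_real_power add: power2_eq_square)
          finally show ?thesis using iN \<open>j = N\<close> unfolding e'_def by simp
        qed
      qed
    qed
    then show ?thesis by blast
  qed
qed

lemma bl_add: "bop_linear \<phi> \<Longrightarrow> A \<in> bop \<Longrightarrow> B \<in> bop \<Longrightarrow> \<phi> (\<lambda>v. A v + B v) = (\<lambda>v. \<phi> A v + \<phi> B v)"
  unfolding bop_linear_def by blast

lemma bl_scale: "bop_linear \<phi> \<Longrightarrow> A \<in> bop \<Longrightarrow> \<phi> (\<lambda>v. scaleC c (A v)) = (\<lambda>v. scaleC c (\<phi> A v))"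
  unfolding bop_linear_def by blast

lemma bl_bop: "bop_linear \<phi> \<Longrightarrow> A \<in> bop \<Longrightarrow> \<phi> A \<in> bop"
  unfolding bop_linear_def by blast

lemma bl_zero: assumes "bop_linear \<phi>" shows "\<phi> (\<lambda>v. 0) = (\<lambda>v. 0)"
proof -
  have "\<phi> (\<lambda>v. scaleC 0 (0::'a)) = (\<lambda>v. scaleC 0 (\<phi> (\<lambda>v. 0) v))"
    using bl_scale[OF assms bop_zero, where c=0] by simp
  then show ?thesis by simp
qed

lemma bl_sum: assumes "bop_linear \<phi>" "finite I" "\<And>i. i \<in> I \<Longrightarrow> A i \<in> bop"
  shows "\<phi> (\<lambda>v. \<Sum>i\<in>I. A i v) = (\<lambda>v. \<Sum>i\<in>I. \<phi> (A i) v)"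
  using assms(2,3)
proof (induct I rule: finite_induct)
  case empty then show ?case using bl_zero[OF assms(1)] by simp
next
  case (insert x F)
  have "\<phi> (\<lambda>v. \<Sum>i\<in>insert x F. A i v) = \<phi> (\<lambda>v. A x v + (\<Sum>i\<in>F. A i v))"
    using insert by simp
  also have "\<dots> = (\<lambda>v. \<phi> (A x) v + \<phi> (\<lambda>v. \<Sum>i\<in>F. A i v) v)"
    using insert by (intro bl_add[OF assms(1)] bop_sum) auto
  also have "\<dots> = (\<lambda>v. \<Sum>i\<in>insert x F. \<phi> (A i) v)" using insert by simp
  finally show ?case .
qed

lemma KL:
  fixes K :: "'s \<Rightarrow> 's \<Rightarrow> ('a::chilbert \<Rightarrow> 'a) \<Rightarrow> ('a \<Rightarrow> 'a)" and N M :: nat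
  assumes ker: "cp_kernel S K" and gb: "\<And>a. a < N \<Longrightarrow> g a \<in> S \<and> b a \<in> bop"
    and X: "opmat_pos M X"
  shows "nonneg (\<Sum>a<N. \<Sum>c<N. \<Sum>p<M. \<Sum>q<M.
            cinner (b a (\<eta> p)) (K (g a) (g c) (X p q) (b c (\<eta> q))))"
proof -
  define \<Psi> where "\<Psi> = (\<lambda>x. (\<lambda>v. \<Sum>j<N. \<Sum>k<N. cadj (b j) (K (g j) (g k) x (b k v))))"
  have h: "\<forall>j<N. g j \<in> S \<and> b j \<in> bop" using gb by blast
  have "cp_map \<Psi>" unfolding \<Psi>_def
    by (rule ker[unfolded cp_kernel_def, THEN conjunct2, rule_format, OF gb])

  then have "opmat_pos M (\<lambda>i j. \<Psi> (X i j))" using X unfolding cp_map_def by blast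
  then have nn: "nonneg (\<Sum>p<M. \<Sum>q<M. cinner (\<eta> p) (\<Psi> (X p q) (\<eta> q)))"
    unfolding opmat_pos_iff by blast
  have "cinner (\<eta> p) (\<Psi> (X p q) (\<eta> q)) =
     (\<Sum>a<N. \<Sum>c<N. cinner (b a (\<eta> p)) (K (g a) (g c) (X p q) (b c (\<eta> q))))" for p q
    unfolding \<Psi>_def by (simp add: cinner_sum_right cadj_prop gb)
  then have "(\<Sum>p<M. \<Sum>q<M. cinner (\<eta> p) (\<Psi> (X p q) (\<eta> q))) =
     (\<Sum>p<M. \<Sum>q<M. \<Sum>a<N. \<Sum>c<N. cinner (b a (\<eta> p)) (K (g a) (g c) (X p q) (b c (\<eta> q))))"
    by simp
  also have "\<dots> = (\<Sum>p<M. \<Sum>a<N. \<Sum>q<M. \<Sum>c<N. cinner (b a (\<eta> p)) (K (g a) (g c) (X p q) (b c (\<eta> q))))"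
    by (rule sum.cong[OF refl], rule sum.swap)
  also have "\<dots> = (\<Sum>a<N. \<Sum>p<M. \<Sum>q<M. \<Sum>c<N. cinner (b a (\<eta> p)) (K (g a) (g c) (X p q) (b c (\<eta> q))))"
    by (rule sum.swap)
  also have "\<dots> = (\<Sum>a<N. \<Sum>p<M. \<Sum>c<N. \<Sum>q<M. cinner (b a (\<eta> p)) (K (g a) (g c) (X p q) (b c (\<eta> q))))"
    by (rule sum.cong[OF refl], rule sum.cong[OF refl], rule sum.swap)
  also have "\<dots> = (\<Sum>a<N. \<Sum>c<N. \<Sum>p<M. \<Sum>q<M. cinner (b a (\<eta> p)) (K (g a) (g c) (X p q) (b c (\<eta> q))))"
    by (rule sum.cong[OF refl], rule sum.swap)
  finally show ?thesis using nn by simp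
qed

lemma sum_block: "sum g {m..<m + k} = (\<Sum>r<k. g (m + r))" for m k :: nat
  by (induct k) (simp_all add: add.commute)

lemma sum_regroup: "(\<Sum>i<N * d. f i) = (\<Sum>a<N. \<Sum>r<d. f (a * d + r))" for N d :: nat
  using sum.nat_group[of f d N] by (simp add: sum_block)

lemma sum_delta_ortho2:
  assumes "orthon N e" "i < N"
  shows "(\<Sum>r<N. f r * cinner (e r) (e i)) = f i"
proof -
  have "(\<Sum>r<N. f r * cinner (e r) (e i)) = (\<Sum>r<N. if r = i then f r else 0)"
    using assms unfolding orthon_def by (intro sum.cong) auto
  also have "\<dots> = f i" using assms(2) by (simp add: sum.delta')
  finally show ?thesis .
qed

lemma ker_bl: "cp_kernel S K \<Longrightarrow> f \<in> S \<Longrightarrow> g \<in> S \<Longrightarrow> bop_linear (K f g)"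
  unfolding cp_kernel_def by blast

lemma opmat_bop: "opmat_pos N Y \<Longrightarrow> i < N \<Longrightarrow> j < N \<Longrightarrow> Y i j \<in> bop"
  unfolding opmat_pos_def by blast

lemma SL_A:
  fixes K :: "'s \<Rightarrow> 's \<Rightarrow> ('a::chilbert \<Rightarrow> 'a) \<Rightarrow> ('a \<Rightarrow> 'a)" and N :: nat
    and \<zeta> e :: "nat \<Rightarrow> 'a"
  assumes ker: "cp_kernel S K" and g: "\<And>a. a < N \<Longrightarrow> g a \<in> S"
    and Y: "opmat_pos N Y" and e: "orthon N e"
  shows "nonneg (\<Sum>a<N. \<Sum>c<N. cinner (\<zeta> a) (K (g a) (g c) (Y a c) (\<zeta> c)))"
proof -
  define b where "b = (\<lambda>a. rk (\<zeta> a) (e a))"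
  have gb: "g a \<in> S \<and> b a \<in> bop" if "a < N" for a using g[OF that] bop_rk unfolding b_def by blast
  have kl: "nonneg (\<Sum>a<N. \<Sum>c<N. \<Sum>p<N. \<Sum>q<N.
            cinner (b a (e p)) (K (g a) (g c) (Y p q) (b c (e q))))"
    by (rule KL[OF ker gb Y]) auto
  have be: "b a (e p) = (if a = p then \<zeta> a else 0)" if "a < N" "p < N" for a p
    using e that unfolding b_def rk_def orthon_def by (auto simp: scaleC_one)
  have lin: "K (g a) (g c) (Y p q) \<in> bop" if "a < N" "c < N" "p < N" "q < N" for a c p q
    using ker_bl[OF ker g[OF that(1)] g[OF that(2)]] opmat_bop[OF Y that(3,4)] by (rule bl_bop)
  have inner: "(\<Sum>p<N. \<Sum>q<N. cinner (b a (e p)) (K (g a) (g c) (Y p q) (b c (e q))))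
      = cinner (\<zeta> a) (K (g a) (g c) (Y a c) (\<zeta> c))" if ac: "a < N" "c < N" for a c
  proof -
    have "(\<Sum>p<N. \<Sum>q<N. cinner (b a (e p)) (K (g a) (g c) (Y p q) (b c (e q))))
       = (\<Sum>p<N. if a = p then (\<Sum>q<N. if c = q then cinner (\<zeta> a) (K (g a) (g c) (Y p q) (\<zeta> c)) else 0) else 0)"
    proof (rule sum.cong[OF refl])
      fix p assume p: "p \<in> {..<N}"
      show "(\<Sum>q<N. cinner (b a (e p)) (K (g a) (g c) (Y p q) (b c (e q))))
          = (if a = p then (\<Sum>q<N. if c = q then cinner (\<zeta> a) (K (g a) (g c) (Y p q) (\<zeta> c)) else 0) else 0)"
      proof (cases "a = p")
        case True
        show ?thesis
        proof -
          have "cinner (b a (e p)) (K (g a) (g c) (Y p q) (b c (e q)))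
              = (if c = q then cinner (\<zeta> a) (K (g a) (g c) (Y p q) (\<zeta> c)) else 0)" if q: "q < N" for q
            using be[OF ac(1) p[simplified]] be[OF ac(2) q] True
              clin_zero[OF bop_clin[OF lin[OF ac p[simplified] q]]] by simp
          then have "(\<Sum>q<N. cinner (b a (e p)) (K (g a) (g c) (Y p q) (b c (e q))))
             = (\<Sum>q<N. if c = q then cinner (\<zeta> a) (K (g a) (g c) (Y p q) (\<zeta> c)) else 0)"
            by (intro sum.cong refl) simp
          then show ?thesis using True by simp
        qed
      next
        case False then show ?thesis using be[OF ac(1)] p by simp
      qed
    qed
    also have "\<dots> = cinner (\<zeta> a) (K (g a) (g c) (Y a c) (\<zeta> c))" using ac by (simp add: sum.delta)
    finally show ?thesis .
  qed
  have "(\<Sum>a<N. \<Sum>c<N. cinner (\<zeta> a) (K (g a) (g c) (Y a c) (\<zeta> c)))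
      = (\<Sum>a<N. \<Sum>c<N. \<Sum>p<N. \<Sum>q<N. cinner (b a (e p)) (K (g a) (g c) (Y p q) (b c (e q))))"
    by (intro sum.cong refl) (simp add: inner)
  then show ?thesis using kl by simp
qed

lemma E_pos:
  fixes e :: "nat \<Rightarrow> 'a::chilbert"
  shows "opmat_pos d (\<lambda>r s. rk (e r) (e s))"
  unfolding opmat_pos_iff
proof (intro conjI allI impI)
  fix i j show "rk (e i) (e j) \<in> bop" by (rule bop_rk)
next
  fix \<eta> :: "nat \<Rightarrow> 'a"
  define z where "z = (\<Sum>s<d. cinner (e s) (\<eta> s))"
  have "(\<Sum>r<d. \<Sum>s<d. cinner (\<eta> r) (rk (e r) (e s) (\<eta> s)))
      = (\<Sum>r<d. \<Sum>s<d. cnj (cinner (e r) (\<eta> r)) * cinner (e s) (\<eta> s))"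
    unfolding rk_def by (intro sum.cong refl) (simp add: cinner_scaleC_right cinner_conj[of "\<eta> _" "e _"] mult.commute)
  also have "\<dots> = cnj z * z" unfolding z_def by (simp add: sum_product)
  finally show "nonneg (\<Sum>r<d. \<Sum>s<d. cinner (\<eta> r) (rk (e r) (e s) (\<eta> s)))"
    by (simp add: nonneg_cnj_mult)
qed

lemma idx_bound: "a < N \<Longrightarrow> r < d \<Longrightarrow> a * d + r < N * (d::nat)"
proof -
  assume a: "a < N" and r: "r < d"
  have "a * d + r < a * d + d" using r by simp
  also have "\<dots> = Suc a * d" by simp
  also have "\<dots> \<le> N * d" using a by (intro mult_right_mono) auto
  finally show ?thesis .
qed

lemma SL_B:
  fixes K :: "'s \<Rightarrow> 's \<Rightarrow> ('a::chilbert \<Rightarrow> 'a) \<Rightarrow> ('a \<Rightarrow> 'a)" and N d :: nat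
    and \<zeta> e :: "nat \<Rightarrow> 'a"
  assumes ker: "cp_kernel S K" and g: "\<And>a. a < N \<Longrightarrow> g a \<in> S"
    and Y: "opmat_pos N Y" and e: "orthon d e" and sp: "spans d e"
  shows "nonneg (\<Sum>a<N. \<Sum>c<N. cinner (\<zeta> a) (K (g a) (g c) (Y a c) (\<zeta> c)))"
proof -
  define Mx where "Mx = (\<lambda>i j. cinner (e (i mod d)) (Y (i div d) (j div d) (e (j mod d))))"
  have dm: "(a * d + r) div d = a" "(a * d + r) mod d = r" if "r < d" for a r
    using that by auto
  have Ylin: "clin (Y a c)" if "a < N" "c < N" for a c using opmat_bop[OF Y that] by (rule bop_clin)
  have Mxe: "Mx (a * d + r) (c * d + s) = cinner (e r) (Y a c (e s))" if "r < d" "s < d" for a c r s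
    unfolding Mx_def using dm that by simp
  have psdM: "psd (N * d) Mx" unfolding psd_def
  proof
    fix c :: "nat \<Rightarrow> complex"
    define z where "z = (\<lambda>a. \<Sum>r<d. scaleC (c (a * d + r)) (e r))"
    have eq1: "(\<Sum>r<d. \<Sum>s<d. cnj (c (a * d + r)) * Mx (a * d + r) (b * d + s) * c (b * d + s))
        = cinner (z a) (Y a b (z b))" if ab: "a < N" "b < N" for a b
    proof -
      have "cinner (z a) (Y a b (z b)) = (\<Sum>r<d. cnj (c (a * d + r)) * cinner (e r) (Y a b (z b)))"
        unfolding z_def by (simp add: cinner_sum_left cinner_scaleC_left)
      also have "\<dots> = (\<Sum>r<d. \<Sum>s<d. cnj (c (a * d + r)) * Mx (a * d + r) (b * d + s) * c (b * d + s))"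
      proof (rule sum.cong[OF refl])
        fix r assume r: "r \<in> {..<d}"
        have "Y a b (z b) = (\<Sum>s<d. scaleC (c (b * d + s)) (Y a b (e s)))"
          unfolding z_def by (simp add: clin_sum[OF Ylin[OF ab]] clinD(2)[OF Ylin[OF ab]])
        then have "cinner (e r) (Y a b (z b)) = (\<Sum>s<d. c (b * d + s) * cinner (e r) (Y a b (e s)))"
          by (simp add: cinner_sum_right cinner_scaleC_right)
        also have "\<dots> = (\<Sum>s<d. Mx (a * d + r) (b * d + s) * c (b * d + s))"
          using r by (intro sum.cong refl) (simp add: Mxe mult.commute)
        finally show "cnj (c (a * d + r)) * cinner (e r) (Y a b (z b))
            = (\<Sum>s<d. cnj (c (a * d + r)) * Mx (a * d + r) (b * d + s) * c (b * d + s))"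
          by (simp add: sum_distrib_left mult.assoc)
      qed
      finally show ?thesis by simp
    qed
    have "form (N * d) Mx c = (\<Sum>a<N. \<Sum>r<d. \<Sum>b<N. \<Sum>s<d.
            cnj (c (a * d + r)) * Mx (a * d + r) (b * d + s) * c (b * d + s))"
      unfolding form_def by (simp only: sum_regroup)
    also have "\<dots> = (\<Sum>a<N. \<Sum>b<N. \<Sum>r<d. \<Sum>s<d.
            cnj (c (a * d + r)) * Mx (a * d + r) (b * d + s) * c (b * d + s))"
      by (rule sum.cong[OF refl], rule sum.swap)
    also have "\<dots> = (\<Sum>a<N. \<Sum>b<N. cinner (z a) (Y a b (z b)))"
      by (intro sum.cong refl) (simp add: eq1)
    finally show "nonneg (form (N * d) Mx c)" using Y unfolding opmat_pos_iff by simp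
  qed
  obtain L :: nat and \<omega> where \<omega>: "\<forall>i<N * d. \<forall>j<N * d. Mx i j = (\<Sum>l<L. \<omega> l i * cnj (\<omega> l j))"
    using chol[OF psdM] by blast
  define E where "E = (\<lambda>r s. rk (e r) (e s))"
  define co where "co = (\<lambda>l a c r s. \<omega> l (a * d + r) * cnj (\<omega> l (c * d + s)))"
  have Yexp: "Y a c = (\<lambda>v. \<Sum>l<L. \<Sum>r<d. \<Sum>s<d. scaleC (co l a c r s) (E r s v))"
    if ac: "a < N" "c < N" for a c
  proof
    fix v
    have Ye: "Y a c v = (\<Sum>r<d. scaleC (cinner (e r) (Y a c v)) (e r))" using sp unfolding spans_def by blast
    have co_r: "cinner (e r) (Y a c v) = (\<Sum>l<L. \<Sum>s<d. co l a c r s * cinner (e s) v)" if r: "r < d" for r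
    proof -
      have "Y a c v = Y a c (\<Sum>s<d. scaleC (cinner (e s) v) (e s))" using sp unfolding spans_def by metis
      also have "\<dots> = (\<Sum>s<d. scaleC (cinner (e s) v) (Y a c (e s)))"
        by (simp add: clin_sum[OF Ylin[OF ac]] clinD(2)[OF Ylin[OF ac]])
      finally have "cinner (e r) (Y a c v) = (\<Sum>s<d. cinner (e s) v * cinner (e r) (Y a c (e s)))"
        by (simp add: cinner_sum_right cinner_scaleC_right)
      also have "\<dots> = (\<Sum>s<d. cinner (e s) v * (\<Sum>l<L. co l a c r s))"
      proof (rule sum.cong[OF refl])
        fix s assume s: "s \<in> {..<d}"
        have "cinner (e r) (Y a c (e s)) = Mx (a * d + r) (c * d + s)" using r s by (simp add: Mxe)
        also have "\<dots> = (\<Sum>l<L. co l a c r s)"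
          using \<omega> idx_bound[OF ac(1) r] idx_bound[OF ac(2)] s unfolding co_def by simp
        finally show "cinner (e s) v * cinner (e r) (Y a c (e s)) = cinner (e s) v * (\<Sum>l<L. co l a c r s)"
          by simp
      qed
      also have "\<dots> = (\<Sum>s<d. \<Sum>l<L. co l a c r s * cinner (e s) v)"
        by (simp add: sum_distrib_left mult.commute)
      also have "\<dots> = (\<Sum>l<L. \<Sum>s<d. co l a c r s * cinner (e s) v)" by (rule sum.swap)
      finally show ?thesis .
    qed
    have "(\<Sum>l<L. \<Sum>r<d. \<Sum>s<d. scaleC (co l a c r s) (E r s v))
        = (\<Sum>l<L. \<Sum>r<d. \<Sum>s<d. scaleC (co l a c r s * cinner (e s) v) (e r))"
      unfolding E_def rk_def by (simp add: scaleC_scaleC mult.commute)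
    also have "\<dots> = (\<Sum>r<d. \<Sum>l<L. \<Sum>s<d. scaleC (co l a c r s * cinner (e s) v) (e r))"
      by (rule sum.swap)
    also have "\<dots> = (\<Sum>r<d. scaleC (\<Sum>l<L. \<Sum>s<d. co l a c r s * cinner (e s) v) (e r))"
      by (simp add: scaleC_sum_left)
    also have "\<dots> = (\<Sum>r<d. scaleC (cinner (e r) (Y a c v)) (e r))"
      by (intro sum.cong refl) (simp add: co_r)
    also have "\<dots> = Y a c v" using Ye by simp
    finally show "Y a c v = (\<Sum>l<L. \<Sum>r<d. \<Sum>s<d. scaleC (co l a c r s) (E r s v))" by simp
  qed
  have Ebop: "E r s \<in> bop" for r s unfolding E_def by (rule bop_rk)
  have Kexp: "K (g a) (g c) (Y a c) = (\<lambda>v. \<Sum>l<L. \<Sum>r<d. \<Sum>s<d. scaleC (co l a c r s) (K (g a) (g c) (E r s) v))"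
    if ac: "a < N" "c < N" for a c
  proof -
    have bl: "bop_linear (K (g a) (g c))" using ker_bl[OF ker g[OF ac(1)] g[OF ac(2)]] .
    have b1: "(\<lambda>v. scaleC (co l a c r s) (E r s v)) \<in> bop" for l r s by (rule bop_scaleC[OF Ebop])
    have b2: "(\<lambda>v. \<Sum>s<d. scaleC (co l a c r s) (E r s v)) \<in> bop" for l r by (rule bop_sum) (auto simp: b1)
    have b3: "(\<lambda>v. \<Sum>r<d. \<Sum>s<d. scaleC (co l a c r s) (E r s v)) \<in> bop" for l
      using bop_sum[of "{..<d}" "\<lambda>r v. \<Sum>s<d. scaleC (co l a c r s) (E r s v)"] b2 by simp
    have "K (g a) (g c) (Y a c) = K (g a) (g c) (\<lambda>v. \<Sum>l<L. (\<lambda>v. \<Sum>r<d. \<Sum>s<d. scaleC (co l a c r s) (E r s v)) v)"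
      using Yexp[OF ac] by simp
    also have "\<dots> = (\<lambda>v. \<Sum>l<L. K (g a) (g c) (\<lambda>v. \<Sum>r<d. (\<lambda>v. \<Sum>s<d. scaleC (co l a c r s) (E r s v)) v) v)"
      using bl_sum[OF bl, of "{..<L}" "\<lambda>l v. \<Sum>r<d. \<Sum>s<d. scaleC (co l a c r s) (E r s v)"] b3 by simp
    also have "\<dots> = (\<lambda>v. \<Sum>l<L. \<Sum>r<d. K (g a) (g c) (\<lambda>v. \<Sum>s<d. (\<lambda>v. scaleC (co l a c r s) (E r s v)) v) v)"
      using bl_sum[OF bl, of "{..<d}" "\<lambda>r v. \<Sum>s<d. scaleC (co _ a c r s) (E r s v)"] b2 by simp
    also have "\<dots> = (\<lambda>v. \<Sum>l<L. \<Sum>r<d. \<Sum>s<d. K (g a) (g c) (\<lambda>v. scaleC (co l a c r s) (E r s v)) v)"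
      using bl_sum[OF bl, of "{..<d}" "\<lambda>s v. scaleC (co _ a c _ s) (E _ s v)"] b1 by simp
    also have "\<dots> = (\<lambda>v. \<Sum>l<L. \<Sum>r<d. \<Sum>s<d. scaleC (co l a c r s) (K (g a) (g c) (E r s) v))"
      using bl_scale[OF bl Ebop] by simp
    finally show ?thesis .
  qed
  have Kbop: "K (g a) (g c) (E r s) \<in> bop" if "a < N" "c < N" for a c r s
    using ker_bl[OF ker g[OF that(1)] g[OF that(2)]] Ebop by (rule bl_bop)
  have "(\<Sum>a<N. \<Sum>c<N. cinner (\<zeta> a) (K (g a) (g c) (Y a c) (\<zeta> c)))
      = (\<Sum>a<N. \<Sum>c<N. \<Sum>l<L. \<Sum>r<d. \<Sum>s<d. co l a c r s * cinner (\<zeta> a) (K (g a) (g c) (E r s) (\<zeta> c)))"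
    by (intro sum.cong refl) (simp add: Kexp cinner_sum_right cinner_scaleC_right)
  also have "\<dots> = (\<Sum>a<N. \<Sum>l<L. \<Sum>c<N. \<Sum>r<d. \<Sum>s<d. co l a c r s * cinner (\<zeta> a) (K (g a) (g c) (E r s) (\<zeta> c)))"
    by (rule sum.cong[OF refl], rule sum.swap)
  also have "\<dots> = (\<Sum>l<L. \<Sum>a<N. \<Sum>c<N. \<Sum>r<d. \<Sum>s<d. co l a c r s * cinner (\<zeta> a) (K (g a) (g c) (E r s) (\<zeta> c)))"
    by (rule sum.swap)
  finally have main: "(\<Sum>a<N. \<Sum>c<N. cinner (\<zeta> a) (K (g a) (g c) (Y a c) (\<zeta> c)))
      = (\<Sum>l<L. \<Sum>a<N. \<Sum>c<N. \<Sum>r<d. \<Sum>s<d. co l a c r s * cinner (\<zeta> a) (K (g a) (g c) (E r s) (\<zeta> c)))" .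
  have each: "nonneg (\<Sum>a<N. \<Sum>c<N. \<Sum>r<d. \<Sum>s<d. co l a c r s * cinner (\<zeta> a) (K (g a) (g c) (E r s) (\<zeta> c)))" for l
  proof -
    define w where "w = (\<lambda>a. \<Sum>r'<d. scaleC (\<omega> l (a * d + r')) (e r'))"
    define b where "b = (\<lambda>a. rk (\<zeta> a) (w a))"
    have gb: "g a \<in> S \<and> b a \<in> bop" if "a < N" for a using g[OF that] bop_rk unfolding b_def by blast
    have kl: "nonneg (\<Sum>a<N. \<Sum>c<N. \<Sum>r<d. \<Sum>s<d.
            cinner (b a (e r)) (K (g a) (g c) (E r s) (b c (e s))))"
      by (rule KL[OF ker gb E_pos[of d e, folded E_def]]) auto
    have be: "b a (e r) = scaleC (cnj (\<omega> l (a * d + r))) (\<zeta> a)" if "r < d" for a r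
    proof -
      have "cinner (w a) (e r) = (\<Sum>r'<d. cnj (\<omega> l (a * d + r')) * cinner (e r') (e r))"
        unfolding w_def by (simp add: cinner_sum_left cinner_scaleC_left)
      also have "\<dots> = cnj (\<omega> l (a * d + r))" by (rule sum_delta_ortho2[OF e that])
      finally show ?thesis unfolding b_def rk_def by simp
    qed
    have "(\<Sum>a<N. \<Sum>c<N. \<Sum>r<d. \<Sum>s<d. cinner (b a (e r)) (K (g a) (g c) (E r s) (b c (e s))))
        = (\<Sum>a<N. \<Sum>c<N. \<Sum>r<d. \<Sum>s<d. co l a c r s * cinner (\<zeta> a) (K (g a) (g c) (E r s) (\<zeta> c)))"
    proof (intro sum.cong refl)
      fix a c r s assume a: "a \<in> {..<N}" and c: "c \<in> {..<N}" and r: "r \<in> {..<d}" and s: "s \<in> {..<d}"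
      have cl: "clin (K (g a) (g c) (E r s))" using Kbop a c by (simp add: bop_clin)
      show "cinner (b a (e r)) (K (g a) (g c) (E r s) (b c (e s)))
          = co l a c r s * cinner (\<zeta> a) (K (g a) (g c) (E r s) (\<zeta> c))"
        using r s unfolding co_def
        by (simp add: be clinD(2)[OF cl] cinner_scaleC_left cinner_scaleC_right mult.assoc)
    qed
    then show ?thesis using kl by simp
  qed
  show ?thesis unfolding main by (rule nonneg_sum, rule each)
qed

lemma SL:
  fixes K :: "'s \<Rightarrow> 's \<Rightarrow> ('a::chilbert \<Rightarrow> 'a) \<Rightarrow> ('a \<Rightarrow> 'a)" and N :: nat
    and \<zeta> :: "nat \<Rightarrow> 'a"
  assumes ker: "cp_kernel S K" and g: "\<And>a. a < N \<Longrightarrow> g a \<in> S"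
    and Y: "opmat_pos N Y"
  shows "nonneg (\<Sum>a<N. \<Sum>c<N. cinner (\<zeta> a) (K (g a) (g c) (Y a c) (\<zeta> c)))"
proof -
  from dichot[of N] show ?thesis
  proof
    assume "\<exists>e::nat \<Rightarrow> 'a. orthon N e"
    then obtain e :: "nat \<Rightarrow> 'a" where e: "orthon N e" by blast
    note th = SL_A[OF ker g Y e]
    show ?thesis by (rule th)
  next
    assume "\<exists>d (e::nat \<Rightarrow> 'a). orthon d e \<and> spans d e"
    then obtain d and e :: "nat \<Rightarrow> 'a" where e: "orthon d e" "spans d e" by blast
    note th = SL_B[OF ker g Y e(1) e(2)]
    show ?thesis by (rule th)
  qed
qed

lemma bl_comp:
  fixes \<phi> \<psi> :: "('a::chilbert \<Rightarrow> 'a) \<Rightarrow> ('a \<Rightarrow> 'a)"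
  assumes "bop_linear \<phi>" "bop_linear \<psi>" shows "bop_linear (\<phi> \<circ> \<psi>)"
  unfolding bop_linear_def
proof (intro conjI ballI allI)
  fix A :: "'a \<Rightarrow> 'a" assume A: "A \<in> bop"
  have pA: "\<psi> A \<in> bop" using bl_bop[OF assms(2) A] .
  show "(\<phi> \<circ> \<psi>) A \<in> bop" using bl_bop[OF assms(1) pA] by simp
  fix B :: "'a \<Rightarrow> 'a" assume B: "B \<in> bop"
  have pB: "\<psi> B \<in> bop" using bl_bop[OF assms(2) B] .
  show "(\<phi> \<circ> \<psi>) (\<lambda>v. A v + B v) = (\<lambda>v. (\<phi> \<circ> \<psi>) A v + (\<phi> \<circ> \<psi>) B v)"
    using bl_add[OF assms(2) A B] bl_add[OF assms(1) pA pB] by simp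
next
  fix A :: "'a \<Rightarrow> 'a" and c assume A: "A \<in> bop"
  have pA: "\<psi> A \<in> bop" using bl_bop[OF assms(2) A] .
  show "(\<phi> \<circ> \<psi>) (\<lambda>v. scaleC c (A v)) = (\<lambda>v. scaleC c ((\<phi> \<circ> \<psi>) A v))"
    using bl_scale[OF assms(2) A] bl_scale[OF assms(1) pA] by simp
qed

lemma bl_kernel_map:
  fixes R :: "nat \<Rightarrow> nat \<Rightarrow> ('a::chilbert \<Rightarrow> 'a) \<Rightarrow> ('a \<Rightarrow> 'a)" and n :: nat
  assumes R: "\<And>j k. j < n \<Longrightarrow> k < n \<Longrightarrow> bop_linear (R j k)"
    and bs: "\<And>j. j < n \<Longrightarrow> bs j \<in> bop"
  shows "bop_linear (\<lambda>x v. \<Sum>j<n. \<Sum>k<n. cadj (bs j) (R j k x (bs k v)))"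
  unfolding bop_linear_def
proof (intro conjI ballI allI)
  fix A :: "'a \<Rightarrow> 'a" assume A: "A \<in> bop"
  show "(\<lambda>v. \<Sum>j<n. \<Sum>k<n. cadj (bs j) (R j k A (bs k v))) \<in> bop"
  proof (rule bop_sum)
    fix j assume j: "j \<in> {..<n}"
    show "(\<lambda>v. \<Sum>k<n. cadj (bs j) (R j k A (bs k v))) \<in> bop"
    proof (rule bop_sum)
      fix k assume k: "k \<in> {..<n}"
      have jk: "j < n" "k < n" using j k by auto
      have "R j k A \<in> bop" using bl_bop[OF R[OF jk] A] .
      then have "(\<lambda>v. R j k A (bs k v)) \<in> bop" using bop_comp bs[OF jk(2)] by blast
      then show "(\<lambda>v. cadj (bs j) (R j k A (bs k v))) \<in> bop"
        using bop_comp[OF cadj_bop[OF bs[OF jk(1)]]] by blast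
    qed simp
  qed simp
next
  fix A B :: "'a \<Rightarrow> 'a" assume A: "A \<in> bop" and B: "B \<in> bop"
  show "(\<lambda>v. \<Sum>j<n. \<Sum>k<n. cadj (bs j) (R j k (\<lambda>v. A v + B v) (bs k v))) =
    (\<lambda>v. (\<Sum>j<n. \<Sum>k<n. cadj (bs j) (R j k A (bs k v))) + (\<Sum>j<n. \<Sum>k<n. cadj (bs j) (R j k B (bs k v))))"
  proof
    fix v
    have "cadj (bs j) (R j k (\<lambda>v. A v + B v) (bs k v))
        = cadj (bs j) (R j k A (bs k v)) + cadj (bs j) (R j k B (bs k v))" if "j < n" "k < n" for j k
      using bl_add[OF R[OF that] A B] clinD(1)[OF bop_clin[OF cadj_bop[OF bs[OF that(1)]]]] by simp
    then show "(\<Sum>j<n. \<Sum>k<n. cadj (bs j) (R j k (\<lambda>v. A v + B v) (bs k v))) =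
        (\<Sum>j<n. \<Sum>k<n. cadj (bs j) (R j k A (bs k v))) + (\<Sum>j<n. \<Sum>k<n. cadj (bs j) (R j k B (bs k v)))"
      by (simp add: sum.distrib)
  qed
next
  fix A :: "'a \<Rightarrow> 'a" and c assume A: "A \<in> bop"
  show "(\<lambda>v. \<Sum>j<n. \<Sum>k<n. cadj (bs j) (R j k (\<lambda>v. scaleC c (A v)) (bs k v))) =
    (\<lambda>v. scaleC c (\<Sum>j<n. \<Sum>k<n. cadj (bs j) (R j k A (bs k v))))"
  proof
    fix v
    have "cadj (bs j) (R j k (\<lambda>v. scaleC c (A v)) (bs k v))
        = scaleC c (cadj (bs j) (R j k A (bs k v)))" if "j < n" "k < n" for j k
      using bl_scale[OF R[OF that] A] clinD(2)[OF bop_clin[OF cadj_bop[OF bs[OF that(1)]]]] by simp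
    then show "(\<Sum>j<n. \<Sum>k<n. cadj (bs j) (R j k (\<lambda>v. scaleC c (A v)) (bs k v))) =
        scaleC c (\<Sum>j<n. \<Sum>k<n. cadj (bs j) (R j k A (bs k v)))"
      by (simp add: scaleC_sum_right)
  qed
qed

lemma divmod_idx: "p < m \<Longrightarrow> (j * m + p) div m = j \<and> (j * m + p) mod m = (p::nat)"
  by auto

lemma div_lt: "a < n * m \<Longrightarrow> a div m < (n::nat)"
  by (simp add: less_mult_imp_div_less)

lemma mod_lt: "a < n * m \<Longrightarrow> a mod m < (m::nat)"
  by (cases "m = 0") auto

lemma double_regroup:
  "(\<Sum>a<n * m. \<Sum>c<n * m. F a c) = (\<Sum>j<n. \<Sum>p<m. \<Sum>k<n. \<Sum>q<m. F (j * m + p) (k * m + q))"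
  for n m :: nat
  by (simp only: sum_regroup)

theorem lemma10:
  fixes S0 :: "(real \<Rightarrow> 'k::chilbert) set"
    and r s t :: real
    and Q P :: "(real \<Rightarrow> 'k) \<Rightarrow> (real \<Rightarrow> 'k) \<Rightarrow> ('h::chilbert \<Rightarrow> 'h) \<Rightarrow> ('h \<Rightarrow> 'h)"
  assumes "totalizing S0"
    and "r < s" and "s < t"
    and "cp_kernel (chi {r..s} ` S0) Q"
    and "cp_kernel (chi {s..t} ` S0) P"
  shows "cp_kernel S0 (\<lambda>f g. Q (chi {r..s} f) (chi {r..s} g) \<circ> P (chi {s..t} f) (chi {s..t} g))"
proof -
  note kQ = assms(4) and kP = assms(5)
  have blQ: "bop_linear (Q (chi {r..s} f) (chi {r..s} g))" if "f \<in> S0" "g \<in> S0" for f g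
    using ker_bl[OF kQ] that by blast
  have blP: "bop_linear (P (chi {s..t} f) (chi {s..t} g))" if "f \<in> S0" "g \<in> S0" for f g
    using ker_bl[OF kP] that by blast
  show ?thesis unfolding cp_kernel_def
  proof (intro conjI ballI allI impI)
    fix f g assume "f \<in> S0" "g \<in> S0"
    then show "bop_linear (Q (chi {r..s} f) (chi {r..s} g) \<circ> P (chi {s..t} f) (chi {s..t} g))"
      by (intro bl_comp blQ blP)
  next
    fix n :: nat and fs :: "nat \<Rightarrow> real \<Rightarrow> 'k" and bs :: "nat \<Rightarrow> 'h \<Rightarrow> 'h"
    assume h: "\<forall>j<n. fs j \<in> S0 \<and> bs j \<in> bop"
    define Q' where "Q' = (\<lambda>j k. Q (chi {r..s} (fs j)) (chi {r..s} (fs k)))"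
    define P' where "P' = (\<lambda>j k. P (chi {s..t} (fs j)) (chi {s..t} (fs k)))"
    have blQ': "bop_linear (Q' j k)" if "j < n" "k < n" for j k
      unfolding Q'_def using h that by (intro blQ) auto
    have blP': "bop_linear (P' j k)" if "j < n" "k < n" for j k
      unfolding P'_def using h that by (intro blP) auto
    have bs: "bs j \<in> bop" if "j < n" for j using h that by blast
    define \<Phi> where "\<Phi> = (\<lambda>x v. \<Sum>j<n. \<Sum>k<n. cadj (bs j) ((Q' j k \<circ> P' j k) x (bs k v)))"
    have blR: "bop_linear (Q' j k \<circ> P' j k)" if "j < n" "k < n" for j k
      using bl_comp[OF blQ'[OF that] blP'[OF that]] .
    have bl\<Phi>: "bop_linear \<Phi>" unfolding \<Phi>_def
      using bl_kernel_map[of n "\<lambda>j k. Q' j k \<circ> P' j k" bs] blR bs by blast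
    have "cp_map \<Phi>" unfolding cp_map_def
    proof (intro conjI allI impI)
      show "bop_linear \<Phi>" by (rule bl\<Phi>)
      fix m :: nat and X :: "nat \<Rightarrow> nat \<Rightarrow> 'h \<Rightarrow> 'h" assume X: "opmat_pos m X"
      show "opmat_pos m (\<lambda>i j. \<Phi> (X i j))" unfolding opmat_pos_iff
      proof (intro conjI allI impI)
        fix i j assume "i < m" "j < m"
        then show "\<Phi> (X i j) \<in> bop" using bl_bop[OF bl\<Phi> opmat_bop[OF X]] by blast
      next
        fix \<eta> :: "nat \<Rightarrow> 'h"
        define N where "N = n * m"
        define \<zeta> where "\<zeta> = (\<lambda>a. bs (a div m) (\<eta> (a mod m)))"
        define gQ where "gQ = (\<lambda>a. chi {r..s} (fs (a div m)))"
        define gP where "gP = (\<lambda>a. chi {s..t} (fs (a div m)))"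
        define X' where "X' = (\<lambda>a c. X (a mod m) (c mod m))"
        define Y where "Y = (\<lambda>a c. P (gP a) (gP c) (X' a c))"
        have gQS: "gQ a \<in> chi {r..s} ` S0" if "a < N" for a
          unfolding gQ_def using h div_lt[of a n m] that N_def by auto
        have gPS: "gP a \<in> chi {s..t} ` S0" if "a < N" for a
          unfolding gP_def using h div_lt[of a n m] that N_def by auto
        have X'pos: "opmat_pos N X'" unfolding opmat_pos_iff
        proof (intro conjI allI impI)
          fix a c assume "a < N" "c < N"
          then show "X' a c \<in> bop" unfolding X'_def N_def
            using opmat_bop[OF X mod_lt mod_lt] by blast
        next
          fix \<xi> :: "nat \<Rightarrow> 'h"
          define \<xi>' where "\<xi>' = (\<lambda>p. \<Sum>j<n. \<xi> (j * m + p))"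
          have "(\<Sum>a<N. \<Sum>c<N. cinner (\<xi> a) (X' a c (\<xi> c)))
             = (\<Sum>j<n. \<Sum>p<m. \<Sum>k<n. \<Sum>q<m. cinner (\<xi> (j * m + p)) (X p q (\<xi> (k * m + q))))"
            unfolding N_def X'_def double_regroup by (intro sum.cong refl) (simp add: divmod_idx)
          also have "\<dots> = (\<Sum>p<m. \<Sum>q<m. cinner (\<xi>' p) (X p q (\<xi>' q)))"
          proof -
            have "cinner (\<xi>' p) (X p q (\<xi>' q)) = (\<Sum>j<n. \<Sum>k<n. cinner (\<xi> (j * m + p)) (X p q (\<xi> (k * m + q))))"
              if "p < m" "q < m" for p q
              unfolding \<xi>'_def using opmat_bop[OF X that]
              by (simp add: clin_sum bop_clin cinner_sum_left cinner_sum_right) (rule sum.swap)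
            then have "(\<Sum>p<m. \<Sum>q<m. cinner (\<xi>' p) (X p q (\<xi>' q)))
                = (\<Sum>p<m. \<Sum>q<m. \<Sum>j<n. \<Sum>k<n. cinner (\<xi> (j * m + p)) (X p q (\<xi> (k * m + q))))"
              by simp
            also have "\<dots> = (\<Sum>p<m. \<Sum>j<n. \<Sum>q<m. \<Sum>k<n. cinner (\<xi> (j * m + p)) (X p q (\<xi> (k * m + q))))"
              by (rule sum.cong[OF refl], rule sum.swap)
            also have "\<dots> = (\<Sum>j<n. \<Sum>p<m. \<Sum>q<m. \<Sum>k<n. cinner (\<xi> (j * m + p)) (X p q (\<xi> (k * m + q))))"
              by (rule sum.swap)
            also have "\<dots> = (\<Sum>j<n. \<Sum>p<m. \<Sum>k<n. \<Sum>q<m. cinner (\<xi> (j * m + p)) (X p q (\<xi> (k * m + q))))"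
              by (rule sum.cong[OF refl], rule sum.cong[OF refl], rule sum.swap)
            finally show ?thesis by simp
          qed
          finally show "nonneg (\<Sum>a<N. \<Sum>c<N. cinner (\<xi> a) (X' a c (\<xi> c)))"
            using X unfolding opmat_pos_iff by simp
        qed
        have Ypos: "opmat_pos N Y" unfolding opmat_pos_iff
        proof (intro conjI allI impI)
          fix a c assume ac: "a < N" "c < N"
          show "Y a c \<in> bop" unfolding Y_def
            using ker_bl[OF kP gPS[OF ac(1)] gPS[OF ac(2)]] opmat_bop[OF X'pos ac] by (rule bl_bop)
        next
          fix \<xi> :: "nat \<Rightarrow> 'h"
          show "nonneg (\<Sum>a<N. \<Sum>c<N. cinner (\<xi> a) (Y a c (\<xi> c)))"
            unfolding Y_def by (rule SL[where g=gP and \<zeta>=\<xi> and N=N, OF kP gPS X'pos])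
        qed
        have nnQ: "nonneg (\<Sum>a<N. \<Sum>c<N. cinner (\<zeta> a) (Q (gQ a) (gQ c) (Y a c) (\<zeta> c)))"
          by (rule SL[where g=gQ and \<zeta>=\<zeta> and N=N, OF kQ gQS Ypos])
        have "(\<Sum>a<N. \<Sum>c<N. cinner (\<zeta> a) (Q (gQ a) (gQ c) (Y a c) (\<zeta> c)))
           = (\<Sum>j<n. \<Sum>p<m. \<Sum>k<n. \<Sum>q<m. cinner (bs j (\<eta> p)) (Q' j k (P' j k (X p q)) (bs k (\<eta> q))))"
          unfolding N_def double_regroup
          by (intro sum.cong refl) (simp add: divmod_idx \<zeta>_def gQ_def gP_def Y_def X'_def Q'_def P'_def)
        also have "\<dots> = (\<Sum>j<n. \<Sum>p<m. \<Sum>q<m. \<Sum>k<n. cinner (bs j (\<eta> p)) (Q' j k (P' j k (X p q)) (bs k (\<eta> q))))"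
          by (rule sum.cong[OF refl], rule sum.cong[OF refl], rule sum.swap)
        also have "\<dots> = (\<Sum>p<m. \<Sum>j<n. \<Sum>q<m. \<Sum>k<n. cinner (bs j (\<eta> p)) (Q' j k (P' j k (X p q)) (bs k (\<eta> q))))"
          by (rule sum.swap)
        also have "\<dots> = (\<Sum>p<m. \<Sum>q<m. \<Sum>j<n. \<Sum>k<n. cinner (bs j (\<eta> p)) (Q' j k (P' j k (X p q)) (bs k (\<eta> q))))"
          by (rule sum.cong[OF refl], rule sum.swap)
        also have "\<dots> = (\<Sum>p<m. \<Sum>q<m. cinner (\<eta> p) (\<Phi> (X p q) (\<eta> q)))"
          unfolding \<Phi>_def by (intro sum.cong refl) (simp add: cinner_sum_right cadj_prop bs)
        finally show "nonneg (\<Sum>p<m. \<Sum>q<m. cinner (\<eta> p) (\<Phi> (X p q) (\<eta> q)))"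
          using nnQ by simp
      qed
    qed
    then show "cp_map (\<lambda>x v. \<Sum>j<n. \<Sum>k<n. cadj (bs j)
        ((Q (chi {r..s} (fs j)) (chi {r..s} (fs k)) \<circ> P (chi {s..t} (fs j)) (chi {s..t} (fs k))) x (bs k v)))"
      unfolding \<Phi>_def Q'_def P'_def .
  qed
qed


end
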